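(* Let $p \geq 2$ and let $\mathbf{A}$ be a spectrally unitary $\mathbb{Z}^p$-action on $\mathbb{Z}^3$ satisfying $\mathrm{Fix}(\mathbf{A}) = \{0\}$. Then there exist a basis $\{w_1, \dots, w_p\}$ of $\mathbb{Z}^p$ and an automorphism $h$ of $\mathbb{Z}^3$ such that, for the conjugated action $\ell \mapsto h \circ \mathbf{A}(\ell) \circ h^{-1}$, written as matrices $A(\ell)$ in the canonical basis of $\mathbb{Z}^3$, $$A(w_1) = \begin{bmatrix} 1 & a & b \\ 0 & -1 & 0 \\ 0 & 0 & -1 \end{bmatrix}, \quad A(w_2) = \begin{bmatrix} -1 & 0 & c \\ 0 & -1 & d \\ 0 & 0 & 1 \end{bmatrix}$$ for some integers $a,b,c,d$ with $ad + 2(b+c) = 0$, and $A(\ell)$ is the identity matrix for every $\ell = \sum_{i=1}^p \ell_i w_i \in \mathbb{Z}^p$ with $\ell_1 = \ell_2 = 0$. In particular, the image of $\mathbf{A}$ is isomorphic to the Klein four-group.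
   Context: A $\mathbb{Z}^p$-action $\mathbf{A}$ on $\mathbb{Z}^q$ is spectrally unitary if it is a homomorphism from $\mathbb{Z}^p$ to the group of automorphisms of $\mathbb{Z}^q$ (equivalently $\mathrm{GL}(q,\mathbb{Z})$) and $1$ is an eigenvalue of $\mathbf{A}(\ell)$ for every $\ell \in \mathbb{Z}^p$. $\mathrm{Fix}(\mathbf{A}) = \{k \in \mathbb{Z}^q : \mathbf{A}(\ell)k = k \text{ for all } \ell \in \mathbb{Z}^p\}$. The image of $\mathbf{A}$ is the group $\{\mathbf{A}(\ell) : \ell \in \mathbb{Z}^p\}$. *)

theory Defs
  imports "HOL-Analysis.Analysis" "HOL-Algebra.Elementary_Groups"
begin

text \<open>Integer matrices invertible over the integers, i.e. GL(q,Z) = Aut(Z^q).\<close>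
definition int_invertible :: "int^'q^'q \<Rightarrow> bool" where
  "int_invertible M \<longleftrightarrow> (\<exists>N. M ** N = mat 1 \<and> N ** M = mat 1)"

text \<open>A Z^p-action on Z^q: a group homomorphism from Z^p to GL(q,Z).\<close>
definition Zaction :: "(int^'p \<Rightarrow> int^'q^'q) \<Rightarrow> bool" where
  "Zaction A \<longleftrightarrow> (\<forall>l. int_invertible (A l)) \<and> (\<forall>l m. A (l + m) = A l ** A m)"

text \<open>1 is an eigenvalue of an integer matrix (over the complex numbers).\<close>
definition has_eigenvalue_one :: "int^'q^'q \<Rightarrow> bool" where
  "has_eigenvalue_one M \<longleftrightarrow>
     (\<exists>v :: complex^'q. v \<noteq> 0 \<and> ((\<chi> i j. of_int (M $ i $ j)) :: complex^'q^'q) *v v = v)"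

definition spectrally_unitary :: "(int^'p \<Rightarrow> int^'q^'q) \<Rightarrow> bool" where
  "spectrally_unitary A \<longleftrightarrow> Zaction A \<and> (\<forall>l. has_eigenvalue_one (A l))"

definition Fix :: "(int^'p \<Rightarrow> int^'q^'q) \<Rightarrow> (int^'q) set" where
  "Fix A = {k. \<forall>l. A l *v k = k}"

text \<open>A family w indexed by the coordinates is a basis of the free Z-module Z^p.\<close>
definition Zbasis :: "('p \<Rightarrow> int^'p) \<Rightarrow> bool" where
  "Zbasis w \<longleftrightarrow> bij (\<lambda>c :: int^'p. \<Sum>i\<in>UNIV. c $ i *s w i)"

text \<open>The image of the action as a (multiplicative) group of matrices.\<close>
definition image_group :: "(int^'p \<Rightarrow> int^'q^'q) \<Rightarrow> (int^'q^'q) monoid" where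
  "image_group A = \<lparr>carrier = range A, mult = (**), one = mat 1\<rparr>"

definition Klein_four :: "(int \<times> int) monoid" where
  "Klein_four = integer_mod_group 2 \<times>\<times> integer_mod_group 2"

end

theory Submission
  imports Defs
begin


definition mk3 :: "'a::zero \<Rightarrow> 'a \<Rightarrow> 'a \<Rightarrow> 'a \<Rightarrow> 'a \<Rightarrow> 'a \<Rightarrow> 'a \<Rightarrow> 'a \<Rightarrow> 'a \<Rightarrow> 'a^3^3" where
  "mk3 a11 a12 a13 a21 a22 a23 a31 a32 a33 =
     vector [vector [a11,a12,a13], vector [a21,a22,a23], vector [a31,a32,a33]]"

lemma mk3_nth [simp]:
  "mk3 a11 a12 a13 a21 a22 a23 a31 a32 a33 $ 1 $ 1 = a11"
  "mk3 a11 a12 a13 a21 a22 a23 a31 a32 a33 $ 1 $ 2 = a12"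
  "mk3 a11 a12 a13 a21 a22 a23 a31 a32 a33 $ 1 $ 3 = a13"
  "mk3 a11 a12 a13 a21 a22 a23 a31 a32 a33 $ 2 $ 1 = a21"
  "mk3 a11 a12 a13 a21 a22 a23 a31 a32 a33 $ 2 $ 2 = a22"
  "mk3 a11 a12 a13 a21 a22 a23 a31 a32 a33 $ 2 $ 3 = a23"
  "mk3 a11 a12 a13 a21 a22 a23 a31 a32 a33 $ 3 $ 1 = a31"
  "mk3 a11 a12 a13 a21 a22 a23 a31 a32 a33 $ 3 $ 2 = a32"
  "mk3 a11 a12 a13 a21 a22 a23 a31 a32 a33 $ 3 $ 3 = a33"
  by (simp_all add: mk3_def)

lemma mat_eq3: "(M::'a^3^3) = N \<longleftrightarrow>
   M$1$1 = N$1$1 \<and> M$1$2 = N$1$2 \<and> M$1$3 = N$1$3 \<and>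
   M$2$1 = N$2$1 \<and> M$2$2 = N$2$2 \<and> M$2$3 = N$2$3 \<and>
   M$3$1 = N$3$1 \<and> M$3$2 = N$3$2 \<and> M$3$3 = N$3$3"
  by (auto simp: vec_eq_iff forall_3)

lemma vec_eq3: "(x::'a^3) = y \<longleftrightarrow> x$1 = y$1 \<and> x$2 = y$2 \<and> x$3 = y$3"
  by (auto simp: vec_eq_iff forall_3)

lemma mk3_eta: "(M::'a::zero^3^3) = mk3 (M$1$1) (M$1$2) (M$1$3) (M$2$1) (M$2$2) (M$2$3) (M$3$1) (M$3$2) (M$3$3)"
  by (simp add: mat_eq3)

lemma mk3_eq_iff [simp]:
  "mk3 a11 a12 a13 a21 a22 a23 a31 a32 a33 = mk3 b11 b12 b13 b21 b22 b23 b31 b32 b33 \<longleftrightarrow>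
   a11 = b11 \<and> a12 = b12 \<and> a13 = b13 \<and> a21 = b21 \<and> a22 = b22 \<and> a23 = b23 \<and> a31 = b31 \<and> a32 = b32 \<and> a33 = b33"
  by (simp add: mat_eq3)

lemma mk3_mult [simp]:
  "mk3 a11 a12 a13 a21 a22 a23 a31 a32 a33 ** mk3 b11 b12 b13 b21 b22 b23 b31 b32 b33 =
   mk3 (a11*b11+a12*b21+a13*b31) (a11*b12+a12*b22+a13*b32) (a11*b13+a12*b23+a13*b33)
       (a21*b11+a22*b21+a23*b31) (a21*b12+a22*b22+a23*b32) (a21*b13+a22*b23+a23*b33)
       (a31*b11+a32*b21+a33*b31) (a31*b12+a32*b22+a33*b32) (a31*b13+a32*b23+a33*b33)"
  by (simp add: mat_eq3 matrix_matrix_mult_def sum_3)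

lemma mat1_mk3: "(mat 1 :: 'a::{zero,one}^3^3) = mk3 1 0 0 0 1 0 0 0 1"
  by (simp add: mat_eq3 mat_def)

lemma mk3_diff [simp]:
  "mk3 a11 a12 a13 a21 a22 a23 a31 a32 a33 - mk3 b11 b12 b13 b21 b22 b23 b31 b32 b33 =
   mk3 (a11-b11) (a12-b12) (a13-b13) (a21-b21) (a22-b22) (a23-b23) (a31-b31) (a32-b32) (a33-b33)"
  by (simp add: mat_eq3)

lemma det_mk3 [simp]:
  "det (mk3 a11 a12 a13 a21 a22 a23 a31 a32 a33) =
    a11*a22*a33 + a12*a23*a31 + a13*a21*a32 - a11*a23*a32 - a12*a21*a33 - a13*a22*a31"
  by (simp add: det_3)

definition v3 :: "'a::zero \<Rightarrow> 'a \<Rightarrow> 'a \<Rightarrow> 'a^3" where "v3 a b c = vector [a,b,c]"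

lemma v3_nth [simp]: "v3 a b c $ 1 = a" "v3 a b c $ 2 = b" "v3 a b c $ 3 = c"
  by (simp_all add: v3_def)

lemma v3_eta: "(x::'a::zero^3) = v3 (x$1) (x$2) (x$3)"
  by (simp add: vec_eq3)

lemma v3_eq_iff [simp]: "v3 a b c = v3 a' b' c' \<longleftrightarrow> a = a' \<and> b = b' \<and> c = c'"
  by (simp add: vec_eq3)

lemma mk3_mv [simp]:
  "mk3 a11 a12 a13 a21 a22 a23 a31 a32 a33 *v v3 x y z =
   v3 (a11*x+a12*y+a13*z) (a21*x+a22*y+a23*z) (a31*x+a32*y+a33*z)"
  by (simp add: vec_eq3 matrix_vector_mult_def sum_3)

lemma v3_zero: "(0::'a::zero^3) = v3 0 0 0"
  by (simp add: vec_eq3)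

lemma v3_eq_0_iff [simp]: "v3 a b c = 0 \<longleftrightarrow> a = 0 \<and> b = 0 \<and> c = 0"
  by (simp add: vec_eq3)

definition adj3 :: "'a::comm_ring_1^3^3 \<Rightarrow> 'a^3^3" where
  "adj3 M = mk3 (M$2$2*M$3$3 - M$2$3*M$3$2) (M$1$3*M$3$2 - M$1$2*M$3$3) (M$1$2*M$2$3 - M$1$3*M$2$2)
                (M$2$3*M$3$1 - M$2$1*M$3$3) (M$1$1*M$3$3 - M$1$3*M$3$1) (M$1$3*M$2$1 - M$1$1*M$2$3)
                (M$2$1*M$3$2 - M$2$2*M$3$1) (M$1$2*M$3$1 - M$1$1*M$3$2) (M$1$1*M$2$2 - M$1$2*M$2$1)"

lemma mk3_cases: fixes M :: "'a::zero^3^3"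
  obtains a11 a12 a13 a21 a22 a23 a31 a32 a33 where "M = mk3 a11 a12 a13 a21 a22 a23 a31 a32 a33"
  using mk3_eta by blast

lemma v3_cases: fixes x :: "'a::zero^3"
  obtains a b c where "x = v3 a b c"
  using v3_eta by blast

lemma adj3_mk3 [simp]: "adj3 (mk3 a11 a12 a13 a21 a22 a23 a31 a32 a33) =
   mk3 (a22*a33 - a23*a32) (a13*a32 - a12*a33) (a12*a23 - a13*a22)
       (a23*a31 - a21*a33) (a11*a33 - a13*a31) (a13*a21 - a11*a23)
       (a21*a32 - a22*a31) (a12*a31 - a11*a32) (a11*a22 - a12*a21)"
  by (simp add: adj3_def)

lemma adj3_mult: fixes M :: "'a::comm_ring_1^3^3"
  shows "adj3 M ** M = mk3 (det M) 0 0 0 (det M) 0 0 0 (det M)"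
  by (cases M rule: mk3_cases, simp add: algebra_simps)

lemma adj3_mult2: fixes M :: "'a::comm_ring_1^3^3"
  shows "M ** adj3 M = mk3 (det M) 0 0 0 (det M) 0 0 0 (det M)"
  by (cases M rule: mk3_cases, simp add: algebra_simps)

lemma mm_diff_left: "(A::'a::ring_1^'n^'m) ** (B - C) = A ** B - A ** C"
  by (simp add: matrix_matrix_mult_def vec_eq_iff algebra_simps sum_subtractf)
lemma mm_diff_right: "((B::'a::ring_1^'n^'m) - C) ** A = B ** A - C ** A"
  by (simp add: matrix_matrix_mult_def vec_eq_iff algebra_simps sum_subtractf)

lemma chi_map_mk3: "((\<chi> i j. f ((M::'a::zero^3^3) $ i $ j)) :: 'b::zero^3^3) =
  mk3 (f (M$1$1)) (f (M$1$2)) (f (M$1$3)) (f (M$2$1)) (f (M$2$2)) (f (M$2$3)) (f (M$3$1)) (f (M$3$2)) (f (M$3$3))"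
  by (simp add: mat_eq3)

lemma eig_det: fixes M :: "int^3^3" assumes "has_eigenvalue_one M" shows "det (M - mat 1) = 0"
proof -
  obtain v :: "complex^3" where v: "v \<noteq> 0" "(\<chi> i j. of_int (M$i$j)) *v v = v"
    using assms unfolding has_eigenvalue_one_def by blast
  define C where "C = ((\<chi> i j. of_int (M$i$j)) :: complex^3^3) - mat 1"
  have Cv: "C *v v = 0" using v(2) by (simp add: C_def matrix_vector_mult_diff_rdistrib)
  have "(adj3 C ** C) *v v = 0" by (simp add: Cv flip: matrix_vector_mul_assoc)
  hence "det C * v$1 = 0 \<and> det C * v$2 = 0 \<and> det C * v$3 = 0"
    by (cases v rule: v3_cases, simp add: adj3_mult v3_zero)
  moreover have "v$1 \<noteq> 0 \<or> v$2 \<noteq> 0 \<or> v$3 \<noteq> 0" using v(1) by (simp add: vec_eq3)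
  ultimately have "det C = 0" by auto
  moreover have "det C = of_int (det (M - mat 1))"
    unfolding C_def chi_map_mk3 by (cases M rule: mk3_cases, simp add: mat1_mk3)
  ultimately show ?thesis by simp
qed




definition good :: "(int^3^3) set \<Rightarrow> bool" where
  "good S \<longleftrightarrow> mat 1 \<in> S \<and> (\<forall>h\<in>S. \<forall>k\<in>S. h ** k \<in> S) \<and> (\<forall>h\<in>S. \<forall>k\<in>S. h ** k = k ** h) \<and>
     (\<forall>h\<in>S. \<exists>k\<in>S. k ** h = mat 1) \<and> (\<forall>h\<in>S. det (h - mat 1) = 0) \<and>
     (\<forall>v. (\<forall>h\<in>S. h *v v = v) \<longrightarrow> v = 0)"

definition cr :: "int^3 \<Rightarrow> int^3 \<Rightarrow> int^3" where
  "cr a b = v3 (a$2*b$3 - a$3*b$2) (a$3*b$1 - a$1*b$3) (a$1*b$2 - a$2*b$1)"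
definition dt :: "int^3 \<Rightarrow> int^3 \<Rightarrow> int" where
  "dt a b = a$1*b$1 + a$2*b$2 + a$3*b$3"

lemma v3_diff [simp]: "v3 a b c - v3 a' b' c' = v3 (a - a') (b - b') (c - c')"
  by (simp add: vec_eq3)
lemma v3_add [simp]: "v3 a b c + v3 a' b' c' = v3 (a + a') (b + b') (c + c')"
  by (simp add: vec_eq3)
lemma v3_uminus [simp]: "- v3 a b c = v3 (- a) (- b) (- c)"
  by (simp add: vec_eq3)
lemma transpose_mk3 [simp]: "transpose (mk3 a11 a12 a13 a21 a22 a23 a31 a32 a33) = mk3 a11 a21 a31 a12 a22 a32 a13 a23 a33"
  by (simp add: mat_eq3 transpose_def)

lemma cr_v3 [simp]: "cr (v3 a1 a2 a3) (v3 b1 b2 b3) = v3 (a2*b3 - a3*b2) (a3*b1 - a1*b3) (a1*b2 - a2*b1)"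
  by (simp add: cr_def)
lemma dt_v3 [simp]: "dt (v3 a1 a2 a3) (v3 b1 b2 b3) = a1*b1 + a2*b2 + a3*b3"
  by (simp add: dt_def)
lemma smult_v3 [simp]: "(c::'a::{zero,times}) *s v3 a1 a2 a3 = v3 (c*a1) (c*a2) (c*a3)"
  by (simp add: vec_eq3)
lemma mv_smult: "(M::int^3^3) *v (c *s x) = c *s (M *v x)"
  by (cases M rule: mk3_cases, cases x rule: v3_cases, simp add: algebra_simps)

lemma cr_cr: "cr r (cr a b) = (dt r b) *s a - (dt r a) *s b"
  by (cases r rule: v3_cases; cases a rule: v3_cases; cases b rule: v3_cases; simp add: algebra_simps)
lemma cr_smult_left: "cr (c *s a) b = c *s cr a b"
  by (cases a rule: v3_cases, cases b rule: v3_cases, simp add: algebra_simps)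
lemma cr_smult_right: "cr a (c *s b) = c *s cr a b"
  by (cases a rule: v3_cases, cases b rule: v3_cases, simp add: algebra_simps)
lemma cr_self [simp]: "cr a a = 0"
  by (cases a rule: v3_cases, simp add: algebra_simps)
lemma cr_zero [simp]: "cr a 0 = 0" "cr 0 a = 0"
  by (cases a rule: v3_cases, simp add: v3_zero)+
lemma dt_self_pos: "a \<noteq> 0 \<Longrightarrow> dt a a > 0"
proof (cases a rule: v3_cases)
  case (1 x y z)
  assume "a \<noteq> 0"
  then have "x \<noteq> 0 \<or> y \<noteq> 0 \<or> z \<noteq> 0" using 1 by simp
  then show ?thesis using 1
    by (simp, smt (verit) zero_le_square not_square_less_zero zero_less_mult_iff)
qed

lemma smult_eq_0: "(c::int) *s (a::int^3) = 0 \<longleftrightarrow> c = 0 \<or> a = 0"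
  by (cases a rule: v3_cases, auto simp: v3_zero)

lemma Lim: "cr ((M::int^3^3) *v a) (M *v b) = transpose (adj3 M) *v cr a b"
  by (cases M rule: mk3_cases, cases a rule: v3_cases, cases b rule: v3_cases,
      simp add: algebra_simps)

lemma mk3_zero: "(0::'a::zero^3^3) = mk3 0 0 0 0 0 0 0 0 0"
  by (simp add: mat_eq3)

lemma mv_e1: "(X::int^3^3) *v v3 1 0 0 = v3 (X$1$1) (X$2$1) (X$3$1)"
  by (cases X rule: mk3_cases, simp)

lemma nonzero_mv: assumes "(M::int^3^3) \<noteq> 0" shows "\<exists>x. M *v x \<noteq> 0"
proof (rule ccontr)
  assume "\<not> ?thesis"
  hence "M *v v3 1 0 0 = 0" "M *v v3 0 1 0 = 0" "M *v v3 0 0 1 = 0" by auto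
  with assms show False by (cases M rule: mk3_cases, simp add: mk3_zero)
qed

definition rw :: "int^3^3 \<Rightarrow> 3 \<Rightarrow> int^3" where "rw M i = v3 (M$i$1) (M$i$2) (M$i$3)"

lemma mv_dt: "(M::int^3^3) *v x = v3 (dt (rw M 1) x) (dt (rw M 2) x) (dt (rw M 3) x)"
  by (cases M rule: mk3_cases, cases x rule: v3_cases, simp add: rw_def)

lemma adj3_rows: "adj3 (M::int^3^3) = 0 \<longleftrightarrow>
   cr (rw M 1) (rw M 2) = 0 \<and> cr (rw M 2) (rw M 3) = 0 \<and> cr (rw M 3) (rw M 1) = 0"
  by (cases M rule: mk3_cases) (auto simp: rw_def mk3_zero v3_zero algebra_simps)

lemma dt_sym: "dt a b = dt b a"
  by (simp add: dt_def algebra_simps)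

lemma par_lemma:
  assumes "dt r a = 0" "dt r b = 0" "dt r' a = 0" "dt r' b = 0" "cr a b \<noteq> 0"
  shows "cr r r' = 0"
proof -
  define w where "w = cr a b"
  have key: "(dt w w) *s s = (dt s w) *s w" if "dt s a = 0" "dt s b = 0" for s
  proof -
    have "cr s w = 0" unfolding w_def cr_cr using that by (simp add: smult_eq_0)
    hence "cr w (cr s w) = 0" by simp
    thus ?thesis unfolding cr_cr by (simp add: dt_sym)
  qed
  have "(dt w w * dt w w) *s cr r r' = cr ((dt w w) *s r) ((dt w w) *s r')"
    by (simp add: cr_smult_left cr_smult_right)
  also have "... = cr ((dt r w) *s w) ((dt r' w) *s w)" using key assms by simp
  also have "... = 0" by (simp add: cr_smult_left cr_smult_right)
  finally have "(dt w w * dt w w) *s cr r r' = 0" .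
  moreover have "dt w w > 0" using assms(5) w_def dt_self_pos by blast
  ultimately show ?thesis by (simp add: smult_eq_0)
qed

lemma Lker: assumes "(M::int^3^3) *v a = 0" "M *v b = 0" "adj3 M \<noteq> 0" shows "cr a b = 0"
proof (rule ccontr)
  assume w: "cr a b \<noteq> 0"
  have z: "dt (rw M i) a = 0" "dt (rw M i) b = 0" if "i = 1 \<or> i = 2 \<or> i = 3" for i
    using assms(1,2) that by (auto simp: mv_dt[of M] v3_zero)
  have "cr (rw M 1) (rw M 2) = 0" "cr (rw M 2) (rw M 3) = 0" "cr (rw M 3) (rw M 1) = 0"
    using par_lemma z w by blast+
  with assms(3) show False by (simp add: adj3_rows)
qed

lemma comm_sub1: assumes "h ** s = s ** (h::int^3^3)" shows "h ** (s - mat 1) = (s - mat 1) ** h"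
  using assms by (simp add: mm_diff_left mm_diff_right)

lemma comm_mv: "h ** M = M ** h \<Longrightarrow> M *v (h *v y) = h *v (M *v y)"
  by (simp add: matrix_vector_mul_assoc)

lemma CE: assumes "good S" shows "\<exists>v. v \<noteq> 0 \<and> (\<forall>h\<in>S. cr (h *v v) v = 0)"
proof -
  have I: "mat 1 \<in> S" and comm: "\<forall>h\<in>S. \<forall>k\<in>S. h ** k = k ** h" and dets: "\<forall>h\<in>S. det (h - mat 1) = 0"
    and fixv: "\<forall>v. (\<forall>h\<in>S. h *v v = v) \<longrightarrow> v = 0" using assms by (auto simp: good_def)
  obtain s0 where s0: "s0 \<in> S" "s0 \<noteq> mat 1"
  proof (rule ccontr)
    assume "\<not> thesis"
    hence "\<forall>h\<in>S. h = mat 1" using that by blast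
    hence "\<forall>h\<in>S. h *v v3 1 0 0 = v3 1 0 0" by (metis matrix_vector_mul_lid)
    hence "v3 1 0 0 = (0::int^3)" using fixv by blast
    thus False by simp
  qed
  define M where "M = s0 - mat 1"
  have detM: "det M = 0" using dets s0 M_def by auto
  have cM: "h ** M = M ** h" if "h \<in> S" for h
    unfolding M_def using comm_sub1 comm that s0(1) by blast
  show ?thesis
  proof (cases "adj3 M = 0")
    case True
    have "M \<noteq> 0" using s0(2) M_def by auto
    then obtain x where x: "M *v x \<noteq> 0" using nonzero_mv by blast
    have "cr (h *v (M *v x)) (M *v x) = 0" if "h \<in> S" for h
    proof -
      have "h *v (M *v x) = M *v (h *v x)" using cM[OF that] by (simp add: matrix_vector_mul_assoc)
      thus ?thesis by (simp add: Lim True)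
    qed
    thus ?thesis using x by blast
  next
    case False
    then obtain x where x: "adj3 M *v x \<noteq> 0" using nonzero_mv by blast
    have Mv: "M *v (adj3 M *v x) = 0"
      by (simp add: matrix_vector_mul_assoc adj3_mult2 detM, cases x rule: v3_cases, simp add: v3_zero)
    have "cr (h *v (adj3 M *v x)) (adj3 M *v x) = 0" if "h \<in> S" for h
    proof (rule Lker[OF _ Mv False])
      have "M *v (h *v (adj3 M *v x)) = h *v (M *v (adj3 M *v x))"
        using cM[OF that] by (rule comm_mv)
      thus "M *v (h *v (adj3 M *v x)) = 0" using Mv by simp
    qed
    thus ?thesis using x by blast
  qed
qed

lemma primitive: fixes v :: "int^3" assumes "v \<noteq> 0" shows "\<exists>g f u. g \<noteq> 0 \<and> v = g *s f \<and> dt u f = 1"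
proof -
  obtain a b c where v: "v = v3 a b c" by (rule v3_cases)
  define g where "g = gcd (gcd a b) c"
  have g0: "g \<noteq> 0" using assms v g_def by auto
  obtain x y where xy: "x*a + y*b = gcd a b" using bezout_int by blast
  obtain s t where st: "s * gcd a b + t * c = g" unfolding g_def using bezout_int by blast
  have "g dvd gcd a b" "g dvd c" unfolding g_def by (rule gcd_dvd1, rule gcd_dvd2)
  hence da: "g dvd a" "g dvd b" "g dvd c" by (meson dvd_trans gcd_dvd1 gcd_dvd2)+
  define f where "f = v3 (a div g) (b div g) (c div g)"
  have vf: "v = g *s f" using da by (simp add: v f_def)
  define u where "u = v3 (s*x) (s*y) t"
  have "dt u v = g" using xy st by (simp add: u_def v algebra_simps flip: xy)
  hence "g * dt u f = g" using vf by (cases f rule: v3_cases, simp add: u_def algebra_simps)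
  hence "dt u f = 1" using g0 by simp
  thus ?thesis using g0 vf by blast
qed

lemma completion: fixes f u :: "int^3" assumes "dt u f = 1" shows "\<exists>P. det P = 1 \<and> P *v v3 1 0 0 = f"
proof -
  obtain p q r where f: "f = v3 p q r" by (rule v3_cases)
  obtain u1 u2 u3 where u: "u = v3 u1 u2 u3" by (rule v3_cases)
  obtain d q' r' x y where dq: "q = d*q'" "r = d*r'" "x*q' + y*r' = 1"
  proof (cases "q = 0 \<and> r = 0")
    case True
    then show ?thesis using that[of 0 1 0 1 0] by simp
  next
    case False
    define d where "d = gcd q r"
    have d0: "d \<noteq> 0" using False d_def by auto
    obtain x y where xy: "x*q + y*r = d" using bezout_int d_def by blast
    have dd: "d dvd q" "d dvd r" unfolding d_def by auto
    have e: "d * (q div d) = q" "d * (r div d) = r" using dd by simp_all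
    have "d * (x * (q div d) + y * (r div d)) = x * (d * (q div d)) + y * (d * (r div d))"
      by (simp only: distrib_left mult.left_commute)
    hence "d * (x * (q div d) + y * (r div d)) = x*q + y*r" by (simp only: e)
    hence "d * (x * (q div d) + y * (r div d)) = d" using xy by simp
    hence "x * (q div d) + y * (r div d) = 1" using d0 by simp
    thus ?thesis using that[of d "q div d" "r div d" x y] dd by simp
  qed
  define a where "a = u1"
  define b where "b = u2*q' + u3*r'"
  have ab: "a*p + b*d = 1" using assms unfolding a_def b_def f u by (simp add: dq algebra_simps)
  define P where "P = mk3 p (-b) 0 q (a*q') (-y) r (a*r') x"
  have "det P = (a*p + b*d) * (x*q' + y*r')" unfolding P_def by (simp add: dq algebra_simps)
  hence "det P = 1" using dq(3) ab by simp
  moreover have "P *v v3 1 0 0 = f" by (simp add: P_def f)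
  ultimately show ?thesis by blast
qed




lemma assoc_cancel: assumes "Hinv ** H = mat 1" shows "X ** Hinv ** H = (X::'a::semiring_1^'n^'n)"
  by (metis assms matrix_mul_assoc matrix_mul_rid)

lemma conj_mult: assumes "Hinv ** H = mat 1"
  shows "(H ** h ** Hinv) ** (H ** k ** Hinv) = H ** (h ** k) ** (Hinv::'a::comm_ring_1^'n^'n)"
proof -
  have "(H ** h ** Hinv) ** (H ** k ** Hinv) = (H ** h ** Hinv ** H) ** k ** Hinv"
    by (simp add: matrix_mul_assoc)
  also have "... = H ** h ** k ** Hinv" using assoc_cancel[OF assms] by simp
  finally show ?thesis by (simp add: matrix_mul_assoc)
qed

lemma good_conj: assumes "good S" "H ** Hinv = mat 1" "Hinv ** H = mat 1"
  shows "good ((\<lambda>h. H ** h ** Hinv) ` S)"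
proof -
  have I: "mat 1 \<in> S" and cl: "\<forall>h\<in>S. \<forall>k\<in>S. h ** k \<in> S" and comm: "\<forall>h\<in>S. \<forall>k\<in>S. h ** k = k ** h"
    and inv: "\<forall>h\<in>S. \<exists>k\<in>S. k ** h = mat 1" and dets: "\<forall>h\<in>S. det (h - mat 1) = 0"
    and fixv: "\<forall>v. (\<forall>h\<in>S. h *v v = v) \<longrightarrow> v = 0" using assms(1) by (auto simp: good_def)
  let ?c = "\<lambda>h. H ** h ** Hinv"
  have cm: "?c h ** ?c k = ?c (h ** k)" for h k using conj_mult[OF assms(3)] .
  have "?c (mat 1) = mat 1" using assms(2) by simp
  hence A1: "mat 1 \<in> ?c ` S" using I by (metis image_eqI)
  have A2: "\<forall>x\<in>?c ` S. \<forall>y\<in>?c ` S. x ** y \<in> ?c ` S" using cl cm by auto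
  have A3: "\<forall>x\<in>?c ` S. \<forall>y\<in>?c ` S. x ** y = y ** x" using comm cm by auto
  have A4: "\<forall>x\<in>?c ` S. \<exists>y\<in>?c ` S. y ** x = mat 1"
  proof
    fix x assume "x \<in> ?c ` S"
    then obtain h where h: "h \<in> S" "x = ?c h" by auto
    then obtain k where "k \<in> S" "k ** h = mat 1" using inv by auto
    hence "?c k ** x = mat 1" using h cm assms(2) by simp
    thus "\<exists>y\<in>?c ` S. y ** x = mat 1" using \<open>k \<in> S\<close> by auto
  qed
  have A5: "\<forall>x\<in>?c ` S. det (x - mat 1) = 0"
  proof
    fix x assume "x \<in> ?c ` S"
    then obtain h where h: "h \<in> S" "x = ?c h" by auto
    have "x - mat 1 = H ** (h - mat 1) ** Hinv" using h assms(2) by (simp add: mm_diff_left mm_diff_right)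
    thus "det (x - mat 1) = 0" using dets h by (simp add: det_mul)
  qed
  have A6: "\<forall>v. (\<forall>x\<in>?c ` S. x *v v = v) \<longrightarrow> v = 0"
  proof (intro allI impI)
    fix v assume a: "\<forall>x\<in>?c ` S. x *v v = v"
    have "h *v (Hinv *v v) = Hinv *v v" if "h \<in> S" for h
    proof -
      have hv: "?c h *v v = v" using a that by auto
      have e: "Hinv ** (H ** h ** Hinv) = h ** Hinv" using assms(3) by (metis matrix_mul_assoc matrix_mul_lid)
      have "Hinv *v v = Hinv *v (?c h *v v)" using hv by simp
      also have "... = h *v (Hinv *v v)" by (simp only: matrix_vector_mul_assoc e)
      finally show ?thesis by simp
    qed
    hence "Hinv *v v = 0" using fixv by blast
    hence "H *v (Hinv *v v) = 0" by simp
    thus "v = 0" using assms(2) by (simp add: matrix_vector_mul_assoc)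
  qed
  show ?thesis unfolding good_def using A1 A2 A3 A4 A5 A6 by blast
qed

lemma stepA: assumes "good S"
  shows "\<exists>H Hinv :: int^3^3. H ** Hinv = mat 1 \<and> Hinv ** H = mat 1 \<and>
           (\<forall>h\<in>S. (H ** h ** Hinv)$2$1 = 0 \<and> (H ** h ** Hinv)$3$1 = 0)"
proof -
  obtain v where v: "v \<noteq> 0" "\<forall>h\<in>S. cr (h *v v) v = 0" using CE[OF assms] by blast
  obtain g f u where gfu: "g \<noteq> 0" "v = g *s f" "dt u f = 1" using primitive[OF v(1)] by blast
  have hf: "h *v f = (dt u (h *v f)) *s f" if "h \<in> S" for h
  proof -
    have "(g * g) *s cr (h *v f) f = cr (h *v v) v" using gfu(2)
      by (simp add: mv_smult cr_smult_left cr_smult_right)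
    hence "cr (h *v f) f = 0" using v(2) that gfu(1) by (simp add: smult_eq_0)
    hence "cr u (cr (h *v f) f) = 0" by simp
    thus ?thesis unfolding cr_cr using gfu(3) by simp
  qed
  obtain P where P: "det P = 1" "P *v v3 1 0 0 = f" using completion[OF gfu(3)] by blast
  have PI: "adj3 P ** P = mat 1" "P ** adj3 P = mat 1"
    using P(1) by (simp_all add: adj3_mult adj3_mult2 mat1_mk3)
  have "(adj3 P ** h ** P)$2$1 = 0 \<and> (adj3 P ** h ** P)$3$1 = 0" if "h \<in> S" for h
  proof -
    have "(adj3 P ** h ** P) *v v3 1 0 0 = adj3 P *v (h *v (P *v v3 1 0 0))"
      by (simp only: matrix_vector_mul_assoc matrix_mul_assoc)
    also have "... = adj3 P *v (h *v f)" using P(2) by simp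
    also have "... = (dt u (h *v f)) *s (adj3 P *v f)" using hf[OF that] by (metis mv_smult)
    also have "adj3 P *v f = v3 1 0 0" using P(2) PI(1) by (metis matrix_vector_mul_assoc matrix_vector_mul_lid)
    finally show ?thesis by (simp add: mv_e1)
  qed
  thus ?thesis using PI by blast
qed

lemma tri_cases: fixes h :: "int^3^3" assumes "h$2$1 = 0" "h$3$1 = 0"
  obtains t a b p q r s where "h = mk3 t a b 0 p q 0 r s"
  using assms by (cases h rule: mk3_cases) auto

lemma twoD: fixes m11 m12 m21 m22 u1 u2 w1 w2 :: int
  assumes "m11*u1 + m12*u2 = 0" "m21*u1 + m22*u2 = 0" "m11*w1 + m12*w2 = 0" "m21*w1 + m22*w2 = 0"
    "\<not>(m11 = 0 \<and> m12 = 0 \<and> m21 = 0 \<and> m22 = 0)"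
  shows "u1*w2 - u2*w1 = 0"
proof -
  have a: "m11*u1 = - (m12*u2)" "m11*w1 = - (m12*w2)" "m21*u1 = - (m22*u2)" "m21*w1 = - (m22*w2)"
    using assms(1-4) by (simp_all add: eq_neg_iff_add_eq_0)
  have "m11*(u1*w2 - u2*w1) = w2*(m11*u1) - u2*(m11*w1)" by (simp add: algebra_simps)
  also have "... = 0" by (simp only: a) (simp add: algebra_simps)
  finally have 1: "m11*(u1*w2 - u2*w1) = 0" .
  have "m12*(u1*w2 - u2*w1) = u1*(m12*w2) - w1*(m12*u2)" by (simp add: algebra_simps)
  also have "... = u1*(-(m11*w1)) - w1*(-(m11*u1))" by (simp only: a minus_minus)
  also have "... = 0" by (simp add: algebra_simps)
  finally have 2: "m12*(u1*w2 - u2*w1) = 0" .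
  have "m21*(u1*w2 - u2*w1) = w2*(m21*u1) - u2*(m21*w1)" by (simp add: algebra_simps)
  also have "... = 0" by (simp only: a) (simp add: algebra_simps)
  finally have 3: "m21*(u1*w2 - u2*w1) = 0" .
  have "m22*(u1*w2 - u2*w1) = u1*(m22*w2) - w1*(m22*u2)" by (simp add: algebra_simps)
  also have "... = u1*(-(m21*w1)) - w1*(-(m21*u1))" by (simp only: a minus_minus)
  also have "... = 0" by (simp add: algebra_simps)
  finally have 4: "m22*(u1*w2 - u2*w1) = 0" .
  show ?thesis using 1 2 3 4 assms(5) by (metis mult_eq_0_iff)
qed

lemma primitive2: fixes x y :: int assumes "x \<noteq> 0 \<or> y \<noteq> 0"
  shows "\<exists>g x' y' al be. g \<noteq> 0 \<and> x = g*x' \<and> y = g*y' \<and> al*x' + be*y' = 1"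
proof -
  define g where "g = gcd x y"
  have g0: "g \<noteq> 0" using assms g_def by auto
  obtain al be where ab: "al*x + be*y = g" using bezout_int g_def by blast
  have dd: "g dvd x" "g dvd y" unfolding g_def by auto
  have e: "g * (x div g) = x" "g * (y div g) = y" using dd by simp_all
  have "g * (al * (x div g) + be * (y div g)) = al * (g * (x div g)) + be * (g * (y div g))"
    by (simp only: distrib_left mult.left_commute)
  hence "g * (al * (x div g) + be * (y div g)) = g" using ab by (simp only: e)
  hence "al * (x div g) + be * (y div g) = 1" using g0 by simp
  thus ?thesis using g0 e(1)[symmetric] e(2)[symmetric] by blast
qed

lemma tri_mult: fixes h k :: "int^3^3"
  assumes "h$2$1 = 0" "h$3$1 = 0" "k$2$1 = 0" "k$3$1 = 0"
  shows "(h ** k)$1$1 = h$1$1 * k$1$1" "(h ** k)$2$1 = 0" "(h ** k)$3$1 = 0"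
    "(h ** k)$2$2 = h$2$2*k$2$2 + h$2$3*k$3$2" "(h ** k)$2$3 = h$2$2*k$2$3 + h$2$3*k$3$3"
    "(h ** k)$3$2 = h$3$2*k$2$2 + h$3$3*k$3$2" "(h ** k)$3$3 = h$3$2*k$2$3 + h$3$3*k$3$3"
proof -
  obtain t a b p q r s where h: "h = mk3 t a b 0 p q 0 r s" using tri_cases[OF assms(1,2)] by blast
  obtain t' a' b' p' q' r' s' where k: "k = mk3 t' a' b' 0 p' q' 0 r' s'" using tri_cases[OF assms(3,4)] by blast
  show "(h ** k)$1$1 = h$1$1 * k$1$1" "(h ** k)$2$1 = 0" "(h ** k)$3$1 = 0"
    "(h ** k)$2$2 = h$2$2*k$2$2 + h$2$3*k$3$2" "(h ** k)$2$3 = h$2$2*k$2$3 + h$2$3*k$3$3"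
    "(h ** k)$3$2 = h$3$2*k$2$2 + h$3$3*k$3$2" "(h ** k)$3$3 = h$3$2*k$2$3 + h$3$3*k$3$3"
    by (simp_all add: h k)
qed

lemma triS: assumes "\<forall>h\<in>S. h$2$1 = 0 \<and> h$3$1 = (0::int)" "h \<in> S"
  obtains t a b p q r s where "h = mk3 t a b 0 p q 0 r s"
proof -
  have "h$2$1 = 0" "h$3$1 = 0" using assms by auto
  thus ?thesis using tri_cases that by blast
qed

lemma stepB: assumes "good S" "\<forall>h\<in>S. h$2$1 = 0 \<and> h$3$1 = 0"
  shows "\<exists>H Hinv :: int^3^3. H ** Hinv = mat 1 \<and> Hinv ** H = mat 1 \<and>
     (\<forall>h\<in>S. (H ** h ** Hinv)$2$1 = 0 \<and> (H ** h ** Hinv)$3$1 = 0 \<and> (H ** h ** Hinv)$3$2 = 0)"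
proof -
  have I: "mat 1 \<in> S" and cl: "\<forall>h\<in>S. \<forall>k\<in>S. h ** k \<in> S" and comm: "\<forall>h\<in>S. \<forall>k\<in>S. h ** k = k ** h"
    and dets: "\<forall>h\<in>S. det (h - mat 1) = 0"
    and fixv: "\<forall>v. (\<forall>h\<in>S. h *v v = v) \<longrightarrow> v = 0" using assms(1) by (auto simp: good_def)
  have D: "(h$1$1 - 1) * ((h$2$2 - 1)*(h$3$3 - 1) - h$2$3*h$3$2) = 0" if hS: "h \<in> S" for h
  proof -
    obtain t a b p q r s where h: "h = mk3 t a b 0 p q 0 r s" using triS[OF assms(2) hS] by blast
    have "det (h - mat 1) = 0" using dets hS by auto
    moreover have "det (h - mat 1) = (t - 1) * ((p - 1)*(s - 1) - q*r)"
      by (simp add: h mat1_mk3 algebra_simps)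
    ultimately show ?thesis by (simp add: h)
  qed
  have TM: "(h ** k)$1$1 = h$1$1 * k$1$1"
    "(h ** k)$2$2 = h$2$2*k$2$2 + h$2$3*k$3$2" "(h ** k)$2$3 = h$2$2*k$2$3 + h$2$3*k$3$3"
    "(h ** k)$3$2 = h$3$2*k$2$2 + h$3$3*k$3$2" "(h ** k)$3$3 = h$3$2*k$2$3 + h$3$3*k$3$3"
    if "h \<in> S" "k \<in> S" for h k using tri_mult assms(2) that by auto
  obtain \<sigma> where sg: "\<sigma> \<in> S" "\<sigma>$1$1 \<noteq> 1"
  proof (rule ccontr)
    assume "\<not> thesis"
    hence "\<forall>h\<in>S. h$1$1 = 1" using that by blast
    hence "\<forall>h\<in>S. h *v v3 1 0 0 = v3 1 0 0" using assms(2) by (simp add: mv_e1)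
    hence "v3 1 0 0 = (0::int^3)" using fixv by blast
    thus False by simp
  qed
  define Bid where "Bid h \<longleftrightarrow> h$2$2 = 1 \<and> h$2$3 = 0 \<and> h$3$2 = 0 \<and> h$3$3 = (1::int)" for h :: "int^3^3"
  define d2 where "d2 h = (h$2$2 - 1)*(h$3$3 - 1) - h$2$3*h$3$2" for h :: "int^3^3"
  have key: "\<exists>x y. (x \<noteq> 0 \<or> y \<noteq> 0) \<and> (\<forall>h\<in>S. (h$2$2*x + h$2$3*y)*y - (h$3$2*x + h$3$3*y)*x = 0)"
  proof (cases "\<exists>k\<in>S. \<not> Bid k \<and> d2 k = 0")
    case True
    then obtain k where k: "k \<in> S" "\<not> Bid k" "d2 k = 0" by blast
    define m11 where "m11 = k$2$2 - 1"
    define m12 where "m12 = k$2$3"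
    define m21 where "m21 = k$3$2"
    define m22 where "m22 = k$3$3 - 1"
    have nz: "\<not>(m11 = 0 \<and> m12 = 0 \<and> m21 = 0 \<and> m22 = 0)" using k(2) by (auto simp: Bid_def m11_def m12_def m21_def m22_def)
    have dm: "m11*m22 - m12*m21 = 0" using k(3) by (simp add: d2_def m11_def m12_def m21_def m22_def)
    obtain x y where xy: "x \<noteq> 0 \<or> y \<noteq> 0" "m11*x + m12*y = 0" "m21*x + m22*y = 0"
    proof (cases "m22 \<noteq> 0 \<or> m21 \<noteq> 0")
      case True
      show ?thesis by (rule that[of m22 "-m21"]) (use True dm in \<open>auto simp: algebra_simps\<close>)
    next
      case False
      show ?thesis by (rule that[of "-m12" m11]) (use False nz in \<open>auto simp: algebra_simps\<close>)
    qed
    have "(h$2$2*x + h$2$3*y)*y - (h$3$2*x + h$3$3*y)*x = 0" if "h \<in> S" for h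
    proof -
      have c: "h ** k = k ** h" using comm that k(1) by blast
      have e1: "h$2$2*k$2$2 + h$2$3*k$3$2 = k$2$2*h$2$2 + k$2$3*h$3$2"
        using arg_cong[OF c, of "\<lambda>X. X$2$2"] TM[OF that k(1)] TM[OF k(1) that] by simp
      have e2: "h$2$2*k$2$3 + h$2$3*k$3$3 = k$2$2*h$2$3 + k$2$3*h$3$3"
        using arg_cong[OF c, of "\<lambda>X. X$2$3"] TM[OF that k(1)] TM[OF k(1) that] by simp
      have e3: "h$3$2*k$2$2 + h$3$3*k$3$2 = k$3$2*h$2$2 + k$3$3*h$3$2"
        using arg_cong[OF c, of "\<lambda>X. X$3$2"] TM[OF that k(1)] TM[OF k(1) that] by simp
      have e4: "h$3$2*k$2$3 + h$3$3*k$3$3 = k$3$2*h$2$3 + k$3$3*h$3$3"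
        using arg_cong[OF c, of "\<lambda>X. X$3$3"] TM[OF that k(1)] TM[OF k(1) that] by simp
      define u1 where "u1 = h$2$2*x + h$2$3*y"
      define u2 where "u2 = h$3$2*x + h$3$3*y"
      have "m11*u1 + m12*u2 = h$2$2*(m11*x + m12*y) + h$2$3*(m21*x + m22*y)"
        unfolding u1_def u2_def m11_def m12_def m21_def m22_def using e1 e2 e3 e4 by algebra
      hence u1: "m11*u1 + m12*u2 = 0" using xy by simp
      have "m21*u1 + m22*u2 = h$3$2*(m11*x + m12*y) + h$3$3*(m21*x + m22*y)"
        unfolding u1_def u2_def m11_def m12_def m21_def m22_def using e1 e2 e3 e4 by algebra
      hence u2: "m21*u1 + m22*u2 = 0" using xy by simp
      have "u1*y - u2*x = 0" using twoD[OF u1 u2 xy(2,3) nz] .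
      thus ?thesis unfolding u1_def u2_def .
    qed
    thus ?thesis using xy(1) by blast
  next
    case False
    hence F: "\<And>k. k \<in> S \<Longrightarrow> d2 k = 0 \<Longrightarrow> Bid k" by blast
    have Bs: "Bid \<sigma>" using F[OF sg(1)] D[OF sg(1)] sg(2) by (simp add: d2_def)
    have "Bid h" if "h \<in> S" for h
    proof (cases "h$1$1 = 1")
      case False
      thus ?thesis using F[OF that] D[OF that] by (simp add: d2_def)
    next
      case True
      have sh: "\<sigma> ** h \<in> S" using cl sg(1) that by blast
      have "(\<sigma> ** h)$1$1 \<noteq> 1" using TM[OF sg(1) that] True sg(2) by simp
      hence "Bid (\<sigma> ** h)" using F[OF sh] D[OF sh] by (simp add: d2_def)
      thus ?thesis using TM[OF sg(1) that] Bs by (simp add: Bid_def)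
    qed
    hence "\<forall>h\<in>S. (h$2$2*1 + h$2$3*0)*0 - (h$3$2*1 + h$3$3*0)*1 = 0" by (simp add: Bid_def)
    thus ?thesis by (metis one_neq_zero)
  qed
  then obtain x y where xy: "x \<noteq> 0 \<or> y \<noteq> 0" "\<forall>h\<in>S. (h$2$2*x + h$2$3*y)*y - (h$3$2*x + h$3$3*y)*x = 0"
    by blast
  obtain g x' y' al be where gx: "g \<noteq> 0" "x = g*x'" "y = g*y'" "al*x' + be*y' = 1"
    using primitive2[OF xy(1)] by blast
  have cond: "(h$2$2*x' + h$2$3*y')*y' - (h$3$2*x' + h$3$3*y')*x' = 0" if "h \<in> S" for h
  proof -
    have "(g*g) * ((h$2$2*x' + h$2$3*y')*y' - (h$3$2*x' + h$3$3*y')*x') =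
          (h$2$2*x + h$2$3*y)*y - (h$3$2*x + h$3$3*y)*x" by (simp add: gx algebra_simps)
    thus ?thesis using xy(2) that gx(1) by simp
  qed
  define P where "P = mk3 1 0 0 0 x' (-be) 0 y' al"
  have dP: "det P = 1" using gx(4) by (simp add: P_def algebra_simps)
  have PI: "adj3 P ** P = mat 1" "P ** adj3 P = mat 1"
    using dP by (simp_all add: adj3_mult adj3_mult2 mat1_mk3)
  have "(adj3 P ** h ** P)$2$1 = 0 \<and> (adj3 P ** h ** P)$3$1 = 0 \<and> (adj3 P ** h ** P)$3$2 = 0" if hS: "h \<in> S" for h
  proof -
    obtain t a b p q r s where h: "h = mk3 t a b 0 p q 0 r s" using triS[OF assms(2) hS] by blast
    have "(adj3 P ** h ** P)$3$2 = - ((p*x' + q*y')*y' - (r*x' + s*y')*x')"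
      by (simp add: P_def h algebra_simps)
    moreover have "(p*x' + q*y')*y' - (r*x' + s*y')*x' = 0" using cond[OF hS] by (simp add: h)
    ultimately show ?thesis by (simp add: P_def h)
  qed
  thus ?thesis using PI by blast
qed




lemma ut_cases: assumes "\<forall>h\<in>S. h$2$1 = 0 \<and> h$3$1 = 0 \<and> h$3$2 = (0::int)" "h \<in> S"
  obtains t a b p q s where "h = mk3 t a b 0 p q 0 0 s"
proof -
  have "h$2$1 = 0" "h$3$1 = 0" "h$3$2 = 0" using assms by auto
  thus ?thesis using that by (cases h rule: mk3_cases) auto
qed

lemma parity_aux:
  fixes f g k :: "int^3^3 \<Rightarrow> int"
  assumes cl: "\<forall>h\<in>S. \<forall>k\<in>S. h ** k \<in> S"
    and mf: "\<forall>h\<in>S. \<forall>h'\<in>S. f (h ** h') = f h * f h'"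
    and mg: "\<forall>h\<in>S. \<forall>h'\<in>S. g (h ** h') = g h * g h'"
    and mk: "\<forall>h\<in>S. \<forall>h'\<in>S. k (h ** h') = k h * k h'"
    and pm: "\<forall>h\<in>S. (f h = 1 \<or> f h = -1) \<and> (g h = 1 \<or> g h = -1) \<and> (k h = 1 \<or> k h = -1)"
    and one: "\<forall>h\<in>S. f h = 1 \<or> g h = 1 \<or> k h = 1"
    and ga: "a \<in> S" "g a = -1" and kb: "b \<in> S" "k b = -1"
    and h: "h \<in> S" "f h = -1" "g h = 1" "k h = 1"
  shows False
proof -
  have nb: "\<not> (g x = -1 \<and> k x = -1)" if "x \<in> S" for x
  proof
    assume x: "g x = -1 \<and> k x = -1"
    show False
    proof (cases "f x = 1")
      case True
      have "h ** x \<in> S" using cl h(1) that by blast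
      moreover have "f (h ** x) = -1" "g (h ** x) = -1" "k (h ** x) = -1"
        using mf mg mk h that x True by auto
      ultimately show False using one by fastforce
    next
      case False
      hence "f x = -1" using pm that by blast
      thus False using one that x by fastforce
    qed
  qed
  have "k a = 1" using nb[OF ga(1)] ga(2) pm ga(1) by blast
  moreover have "g b = 1" using nb[OF kb(1)] kb(2) pm kb(1) by blast
  moreover have "a ** b \<in> S" using cl ga(1) kb(1) by blast
  ultimately show False using nb[of "a ** b"] mg mk ga kb by auto
qed

lemma stepC: assumes "good S" and ut: "\<forall>h\<in>S. h$2$1 = 0 \<and> h$3$1 = 0 \<and> h$3$2 = 0"
  shows "\<exists>a b c d. mk3 1 a b 0 (-1) 0 0 0 (-1) \<in> S \<and> mk3 (-1) 0 c 0 (-1) d 0 0 1 \<in> S \<and>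
     a*d + 2*(b+c) = 0 \<and>
     S = {mat 1, mk3 1 a b 0 (-1) 0 0 0 (-1), mk3 (-1) 0 c 0 (-1) d 0 0 1,
          mk3 1 a b 0 (-1) 0 0 0 (-1) ** mk3 (-1) 0 c 0 (-1) d 0 0 1}"
proof -
  have I: "mat 1 \<in> S" and cl: "\<forall>h\<in>S. \<forall>k\<in>S. h ** k \<in> S" and comm: "\<forall>h\<in>S. \<forall>k\<in>S. h ** k = k ** h"
    and inv: "\<forall>h\<in>S. \<exists>k\<in>S. k ** h = mat 1" and dets: "\<forall>h\<in>S. det (h - mat 1) = 0"
    and fixv: "\<forall>v. (\<forall>h\<in>S. h *v v = v) \<longrightarrow> v = 0" using assms(1) by (auto simp: good_def)
  define d1 where "d1 h = h$1$1" for h :: "int^3^3"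
  define d2 where "d2 h = h$2$2" for h :: "int^3^3"
  define d3 where "d3 h = h$3$3" for h :: "int^3^3"
  have mult: "h ** k = mk3 (h$1$1*k$1$1) (h$1$1*k$1$2 + h$1$2*k$2$2) (h$1$1*k$1$3 + h$1$2*k$2$3 + h$1$3*k$3$3)
       0 (h$2$2*k$2$2) (h$2$2*k$2$3 + h$2$3*k$3$3) 0 0 (h$3$3*k$3$3)" if hS: "h \<in> S" and kS: "k \<in> S" for h k
  proof -
    obtain t a b p q s where h: "h = mk3 t a b 0 p q 0 0 s" using ut_cases[OF ut hS] by blast
    obtain t' a' b' p' q' s' where k: "k = mk3 t' a' b' 0 p' q' 0 0 s'" using ut_cases[OF ut kS] by blast
    show ?thesis by (simp add: h k)
  qed
  have m1: "\<forall>h\<in>S. \<forall>h'\<in>S. d1 (h ** h') = d1 h * d1 h'" using mult by (simp add: d1_def)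
  have m2: "\<forall>h\<in>S. \<forall>h'\<in>S. d2 (h ** h') = d2 h * d2 h'" using mult by (simp add: d2_def)
  have m3: "\<forall>h\<in>S. \<forall>h'\<in>S. d3 (h ** h') = d3 h * d3 h'" using mult by (simp add: d3_def)
  have pm: "\<forall>h\<in>S. (d1 h = 1 \<or> d1 h = -1) \<and> (d2 h = 1 \<or> d2 h = -1) \<and> (d3 h = 1 \<or> d3 h = -1)"
  proof
    fix h assume h: "h \<in> S"
    then obtain k where k: "k \<in> S" "k ** h = mat 1" using inv by blast
    have e: "d1 (k ** h) = 1" "d2 (k ** h) = 1" "d3 (k ** h) = 1"
      using k(2) by (simp_all add: d1_def d2_def d3_def mat_def)
    have "d1 k * d1 h = 1" "d2 k * d2 h = 1" "d3 k * d3 h = 1"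
      using e m1 m2 m3 k(1) h by metis+
    thus "(d1 h = 1 \<or> d1 h = -1) \<and> (d2 h = 1 \<or> d2 h = -1) \<and> (d3 h = 1 \<or> d3 h = -1)"
      by (auto simp: zmult_eq_1_iff)
  qed
  have one: "\<forall>h\<in>S. d1 h = 1 \<or> d2 h = 1 \<or> d3 h = 1"
  proof
    fix h assume h: "h \<in> S"
    obtain t a b p q s where hh: "h = mk3 t a b 0 p q 0 0 s" using ut_cases[OF ut h] by blast
    have "det (h - mat 1) = (t - 1)*(p - 1)*(s - 1)" by (simp add: hh mat1_mk3 algebra_simps)
    thus "d1 h = 1 \<or> d2 h = 1 \<or> d3 h = 1" using dets h by (simp add: hh d1_def d2_def d3_def)
  qed
  have ex1: "\<exists>h\<in>S. d1 h = -1"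
  proof (rule ccontr)
    assume "\<not> ?thesis"
    hence "\<forall>h\<in>S. d1 h = 1" using pm by blast
    hence "\<forall>h\<in>S. h *v v3 1 0 0 = v3 1 0 0" using ut by (simp add: mv_e1 d1_def)
    hence "v3 1 0 0 = (0::int^3)" using fixv by blast
    thus False by simp
  qed
  have ex2: "\<exists>h\<in>S. d2 h = -1"
  proof (rule ccontr)
    assume "\<not> ?thesis"
    hence all2: "\<forall>h\<in>S. d2 h = 1" using pm by blast
    obtain h0 where h0: "h0 \<in> S" "d1 h0 = -1" using ex1 by blast
    obtain t x y p z s where hh: "h0 = mk3 t x y 0 p z 0 0 s" using ut_cases[OF ut h0(1)] by blast
    have "k *v v3 x 2 0 = v3 x 2 0" if k: "k \<in> S" for k
    proof -
      obtain t' a b p' q s' where kk: "k = mk3 t' a b 0 p' q 0 0 s'" using ut_cases[OF ut k] by blast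
      have pp: "p = 1" "p' = 1" "t = -1" using all2 h0 k by (auto simp: hh kk d1_def d2_def)
      have "h0 ** k = k ** h0" using comm h0(1) k by blast
      hence "-a + x = t'*x + a" by (simp add: hh kk pp)
      thus ?thesis by (simp add: kk pp)
    qed
    hence "v3 x 2 0 = (0::int^3)" using fixv by blast
    thus False by simp
  qed
  have ex12: "\<exists>h\<in>S. d1 h = -1 \<and> d2 h = -1"
  proof -
    obtain h1 where h1: "h1 \<in> S" "d1 h1 = -1" using ex1 by blast
    obtain h2 where h2: "h2 \<in> S" "d2 h2 = -1" using ex2 by blast
    show ?thesis
    proof (cases "d2 h1 = -1")
      case True thus ?thesis using h1 by blast
    next
      case F1: False
      show ?thesis
      proof (cases "d1 h2 = -1")
        case True thus ?thesis using h2 by blast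
      next
        case False
        hence "d1 (h1 ** h2) = -1" "d2 (h1 ** h2) = -1" using F1 pm h1 h2 m1 m2 by auto
        moreover have "h1 ** h2 \<in> S" using cl h1 h2 by blast
        ultimately show ?thesis by blast
      qed
    qed
  qed
  have ex3: "\<exists>h\<in>S. d3 h = -1"
  proof (rule ccontr)
    assume "\<not> ?thesis"
    hence all3: "\<forall>h\<in>S. d3 h = 1" using pm by blast
    obtain h0 where h0: "h0 \<in> S" "d1 h0 = -1" "d2 h0 = -1" using ex12 by blast
    obtain t x y p z s where hh: "h0 = mk3 t x y 0 p z 0 0 s" using ut_cases[OF ut h0(1)] by blast
    have ts: "t = -1" "p = -1" "s = 1" using h0 all3 by (auto simp: hh d1_def d2_def d3_def)
    have "k *v v3 (x*z + 2*y) (2*z) 4 = v3 (x*z + 2*y) (2*z) 4" if k: "k \<in> S" for k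
    proof -
      obtain t' a b p' q s' where kk: "k = mk3 t' a b 0 p' q 0 0 s'" using ut_cases[OF ut k] by blast
      have "d3 k = 1" using all3 k by blast
      hence s': "s' = 1" by (simp add: kk d3_def)
      have "h0 ** k = k ** h0" using comm h0(1) k by blast
      hence E: "-a + x*p' = t'*x - a" "-b + x*q + y = t'*y + a*z + b" "-q + z = p'*z + q"
        by (simp_all add: hh kk ts s' algebra_simps)
      have "t'*(x*z + 2*y) + a*(2*z) + b*4 = x*z + 2*y" using E by algebra
      moreover have "p'*(2*z) + q*4 = 2*z" using E by algebra
      ultimately show ?thesis by (simp add: kk s' algebra_simps)
    qed
    hence "v3 (x*z + 2*y) (2*z) 4 = (0::int^3)" using fixv by blast
    thus False by simp
  qed
  have par: "\<forall>h\<in>S. d1 h * d2 h * d3 h = 1"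
  proof
    fix h assume h: "h \<in> S"
    obtain a where a: "a \<in> S" "d1 a = -1" using ex1 by blast
    obtain b where b: "b \<in> S" "d2 b = -1" using ex2 by blast
    obtain c where c: "c \<in> S" "d3 c = -1" using ex3 by blast
    have one': "\<forall>h\<in>S. d2 h = 1 \<or> d1 h = 1 \<or> d3 h = 1" "\<forall>h\<in>S. d3 h = 1 \<or> d1 h = 1 \<or> d2 h = 1"
      using one by auto
    have pm': "\<forall>h\<in>S. (d2 h = 1 \<or> d2 h = -1) \<and> (d1 h = 1 \<or> d1 h = -1) \<and> (d3 h = 1 \<or> d3 h = -1)"
      "\<forall>h\<in>S. (d3 h = 1 \<or> d3 h = -1) \<and> (d1 h = 1 \<or> d1 h = -1) \<and> (d2 h = 1 \<or> d2 h = -1)"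
      using pm by auto
    have n1: "\<not> (d1 h = -1 \<and> d2 h = 1 \<and> d3 h = 1)"
      using parity_aux[OF cl m1 m2 m3 pm one b c] h by blast
    have n2: "\<not> (d2 h = -1 \<and> d1 h = 1 \<and> d3 h = 1)"
      using parity_aux[OF cl m2 m1 m3 pm'(1) one'(1) a c] h by blast
    have n3: "\<not> (d3 h = -1 \<and> d1 h = 1 \<and> d2 h = 1)"
      using parity_aux[OF cl m3 m1 m2 pm'(2) one'(2) a b] h by blast
    have "(d1 h = 1 \<or> d1 h = -1) \<and> (d2 h = 1 \<or> d2 h = -1) \<and> (d3 h = 1 \<or> d3 h = -1)"
      "d1 h = 1 \<or> d2 h = 1 \<or> d3 h = 1" using pm one h by blast+
    thus "d1 h * d2 h * d3 h = 1" using n1 n2 n3 by auto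
  qed
  have parh: "d1 h * d2 h * d3 h = 1" "(d1 h = 1 \<or> d1 h = -1)" "(d2 h = 1 \<or> d2 h = -1)" "(d3 h = 1 \<or> d3 h = -1)"
    if "h \<in> S" for h using par pm that by blast+
  obtain \<alpha> where al: "\<alpha> \<in> S" "d1 \<alpha> = 1" "d2 \<alpha> = -1"
  proof -
    obtain b where b: "b \<in> S" "d2 b = -1" using ex2 by blast
    obtain c where c: "c \<in> S" "d3 c = -1" using ex3 by blast
    show thesis
    proof (cases "d1 b = 1")
      case True thus ?thesis using that b by blast
    next
      case False
      hence b1: "d1 b = -1" using parh[OF b(1)] by blast
      hence b3: "d3 b = 1" using parh[OF b(1)] b(2) by auto
      show ?thesis
      proof (cases "d1 c = 1")
        case True
        hence "d2 c = -1" using parh[OF c(1)] c(2) by auto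
        thus ?thesis using that c True by blast
      next
        case False
        hence c1: "d1 c = -1" using parh[OF c(1)] by blast
        hence c2: "d2 c = 1" using parh[OF c(1)] c(2) by auto
        have "b ** c \<in> S" using cl b(1) c(1) by blast
        moreover have "d1 (b ** c) = 1" "d2 (b ** c) = -1" using m1 m2 b c b1 c1 c2 by auto
        ultimately show ?thesis using that by blast
      qed
    qed
  qed
  have al3: "d3 \<alpha> = -1" using parh[OF al(1)] al by auto
  obtain \<beta> where be: "\<beta> \<in> S" "d1 \<beta> = -1" "d2 \<beta> = -1"
  proof -
    obtain a where a: "a \<in> S" "d1 a = -1" using ex1 by blast
    show thesis
    proof (cases "d2 a = -1")
      case True thus ?thesis using that a by blast
    next
      case False
      hence a2: "d2 a = 1" using parh[OF a(1)] by blast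
      have "\<alpha> ** a \<in> S" using cl al(1) a(1) by blast
      moreover have "d1 (\<alpha> ** a) = -1" "d2 (\<alpha> ** a) = -1" using m1 m2 al a a2 by auto
      ultimately show ?thesis using that by blast
    qed
  qed
  have be3: "d3 \<beta> = 1" using parh[OF be(1)] be by auto
  obtain a b e where aa: "\<alpha> = mk3 1 a b 0 (-1) e 0 0 (-1)"
  proof -
    obtain t a b p e s where "\<alpha> = mk3 t a b 0 p e 0 0 s" using ut_cases[OF ut al(1)] by blast
    thus thesis using that al al3 by (simp add: d1_def d2_def d3_def)
  qed
  obtain x c d where bb: "\<beta> = mk3 (-1) x c 0 (-1) d 0 0 1"
  proof -
    obtain t x c p d s where "\<beta> = mk3 t x c 0 p d 0 0 s" using ut_cases[OF ut be(1)] by blast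
    thus thesis using that be be3 by (simp add: d1_def d2_def d3_def)
  qed
  have unip: "h = mat 1" if h: "h \<in> S" "d1 h = 1" "d2 h = 1" "d3 h = 1" for h
  proof -
    obtain t p q u r s where hh: "h = mk3 t p q 0 u r 0 0 s" using ut_cases[OF ut h(1)] by blast
    have ts: "t = 1" "u = 1" "s = 1" using h by (auto simp: hh d1_def d2_def d3_def)
    have "h ** \<alpha> = \<alpha> ** h" using comm h(1) al(1) by blast
    hence "(h ** \<alpha>)$1$2 = (\<alpha> ** h)$1$2" "(h ** \<alpha>)$1$3 = (\<alpha> ** h)$1$3" by simp_all
    hence E1: "a - p = p + a" "b + p*e - q = q + a*r + b" by (simp_all add: hh aa ts algebra_simps)
    have "h ** \<beta> = \<beta> ** h" using comm h(1) be(1) by blast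
    hence E2: "d + r = -r + d" by (simp_all add: hh bb ts algebra_simps)
    have "p = 0" "r = 0" using E1(1) E2 by simp_all
    hence "q = 0" using E1(2) by simp
    thus ?thesis using \<open>p = 0\<close> \<open>r = 0\<close> by (simp add: hh ts mat1_mk3)
  qed
  have sq: "g ** g = mat 1" if g: "g \<in> S" for g
  proof (rule unip)
    show "g ** g \<in> S" using cl g by blast
    show "d1 (g ** g) = 1" "d2 (g ** g) = 1" "d3 (g ** g) = 1"
      using m1 m2 m3 g parh[OF g] by auto
  qed
  have "\<alpha> ** \<alpha> = mat 1" using sq al(1) by blast
  hence e0: "e = 0" by (simp add: aa mat1_mk3)
  have "\<beta> ** \<beta> = mat 1" using sq be(1) by blast
  hence x0: "x = 0" by (simp add: bb mat1_mk3)
  have "\<alpha> ** \<beta> = \<beta> ** \<alpha>" using comm al(1) be(1) by blast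
  hence rel: "a*d + 2*(b+c) = 0" by (simp add: aa bb e0 x0 algebra_simps)
  have eqg: "h = g" if "h ** g = mat 1" "g \<in> S" for h g
  proof -
    have "h = h ** (g ** g)" using sq that(2) by simp
    also have "... = g" using that(1) by (simp add: matrix_mul_assoc)
    finally show ?thesis .
  qed
  have abS: "\<alpha> ** \<beta> \<in> S" using cl al(1) be(1) by blast
  have "S \<subseteq> {mat 1, \<alpha>, \<beta>, \<alpha> ** \<beta>}"
  proof
    fix h assume h: "h \<in> S"
    have p: "d1 h * d2 h * d3 h = 1" "(d1 h = 1 \<or> d1 h = -1)" "(d2 h = 1 \<or> d2 h = -1)" "(d3 h = 1 \<or> d3 h = -1)"
      using parh[OF h] by blast+
    consider "d1 h = 1" "d2 h = 1" "d3 h = 1" | "d1 h = 1" "d2 h = -1" "d3 h = -1"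
      | "d1 h = -1" "d2 h = -1" "d3 h = 1" | "d1 h = -1" "d2 h = 1" "d3 h = -1"
      using p by auto
    thus "h \<in> {mat 1, \<alpha>, \<beta>, \<alpha> ** \<beta>}"
    proof cases
      case 1 thus ?thesis using unip h by blast
    next
      case 2
      have "h ** \<alpha> = mat 1" using unip[of "h ** \<alpha>"] cl h al m1 m2 m3 al3 2 by auto
      thus ?thesis using eqg al(1) by blast
    next
      case 3
      have "h ** \<beta> = mat 1" using unip[of "h ** \<beta>"] cl h be m1 m2 m3 be3 3 by auto
      thus ?thesis using eqg be(1) by blast
    next
      case 4
      have "d1 (\<alpha> ** \<beta>) = -1" "d2 (\<alpha> ** \<beta>) = 1" "d3 (\<alpha> ** \<beta>) = -1"
        using m1 m2 m3 al be al3 be3 by auto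
      hence "h ** (\<alpha> ** \<beta>) = mat 1" using unip[of "h ** (\<alpha> ** \<beta>)"] cl h abS m1 m2 m3 4 by auto
      thus ?thesis using eqg abS by blast
    qed
  qed
  moreover have "{mat 1, \<alpha>, \<beta>, \<alpha> ** \<beta>} \<subseteq> S" using I al(1) be(1) abS by blast
  ultimately have "S = {mat 1, \<alpha>, \<beta>, \<alpha> ** \<beta>}" by blast
  thus ?thesis using al(1) be(1) rel unfolding aa bb e0 x0 by blast
qed




lemma bij_witness: assumes "\<And>x. g (f x) = x" "\<And>y. f (g y) = y" shows "bij f"
  using bij_betw_byWitness[of UNIV g f UNIV] assms by auto

definition Lw :: "('p \<Rightarrow> int^'p) \<Rightarrow> int^'p \<Rightarrow> int^'p" where
  "Lw w c = (\<Sum>i\<in>UNIV. c $ i *s w i)"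

lemma Zbasis_Lw: "Zbasis w \<longleftrightarrow> bij (Lw w)"
  by (simp add: Zbasis_def Lw_def[abs_def])

lemma Lw_add: "Lw w (c + d) = Lw w c + Lw w d"
  by (simp add: Lw_def vector_sadd_rdistrib sum.distrib)

lemma Lw_diff: "Lw w (c - d) = Lw w c - Lw w d"
  by (simp add: Lw_def vector_sub_rdistrib sum_subtractf)

lemma Lw_axis: "Lw w (s *s axis j 1) = s *s w j"
proof -
  have "Lw w (s *s axis j 1) = (\<Sum>i\<in>UNIV. (if i = j then s *s w j else 0))"
    unfolding Lw_def by (rule sum.cong) (auto simp: axis_def)
  thus ?thesis by simp
qed

lemma Lw_upd: "Lw (w(i := v)) c = Lw w c + c$i *s (v - w i)"
proof -
  have "Lw (w(i := v)) c = (\<Sum>k\<in>UNIV. c$k *s w k + (if k = i then c$i *s (v - w i) else 0))"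
    unfolding Lw_def by (rule sum.cong) (auto simp: vector_ssub_ldistrib)
  thus ?thesis by (simp add: sum.distrib Lw_def)
qed

lemma Zbasis_transfer: assumes "Zbasis w" "bij T" "\<And>c. Lw w' c = Lw w (T c)" shows "Zbasis w'"
proof -
  have "Lw w' = Lw w \<circ> T" using assms(3) by (simp add: fun_eq_iff)
  thus ?thesis using assms(1,2) by (simp add: Zbasis_Lw bij_comp)
qed

lemma Zbasis_std: "Zbasis (\<lambda>i::'p::finite. axis i (1::int))"
proof -
  have "Lw (\<lambda>i::'p::finite. axis i (1::int)) = id" by (simp add: fun_eq_iff Lw_def basis_expansion)
  thus ?thesis by (simp add: Zbasis_Lw)
qed

lemma sum_smult_const: "(\<Sum>k\<in>A. f k *s (v::'a::comm_ring_1^'n)) = (\<Sum>k\<in>A. f k) *s v"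
  by (simp add: vec_eq_iff sum_component sum_distrib_right)

lemma Zbasis_add: assumes "Zbasis (w::'p \<Rightarrow> int^'p)" "i \<noteq> j" shows "Zbasis (w(i := w i + s *s w j))"
proof (rule Zbasis_transfer[OF assms(1)])
  define T where "T c = c + (c$i * s) *s axis j 1" for c :: "int^'p"
  show "Lw (w(i := w i + s *s w j)) c = Lw w (T c)" for c
    by (simp add: Lw_upd T_def Lw_add Lw_axis vector_smult_assoc)
  have Ti: "(T c)$i = c$i" for c using assms(2) by (simp add: T_def axis_def)
  show "bij T"
  proof (rule bij_witness[of "\<lambda>x. x - (x$i * s) *s axis j 1"])
    show "T x - (T x $ i * s) *s axis j 1 = x" for x by (simp add: Ti, simp add: T_def)
    show "T (y - (y $ i * s) *s axis j 1) = y" for y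
    proof -
      have yi: "(y - (y $ i * s) *s axis j 1) $ i = y $ i" using assms(2) by (simp add: axis_def)
      show ?thesis unfolding T_def yi by simp
    qed
  qed
qed

lemma Zbasis_mass: assumes "Zbasis (w::'p \<Rightarrow> int^'p)" "a i1 = 0" "a i2 = 0" "b i1 = 0" "b i2 = 0"
  shows "Zbasis (\<lambda>k. w k + a k *s w i1 + b k *s w i2)"
proof (rule Zbasis_transfer[OF assms(1)])
  define sa where "sa c = (\<Sum>k\<in>UNIV. c$k * a k)" for c :: "int^'p"
  define sb where "sb c = (\<Sum>k\<in>UNIV. c$k * b k)" for c :: "int^'p"
  define T where "T c = c + sa c *s axis i1 1 + sb c *s axis i2 1" for c :: "int^'p"
  have Lsplit: "Lw (\<lambda>k. w k + a k *s w i1 + b k *s w i2) c = Lw w c + sa c *s w i1 + sb c *s w i2" for c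
    by (simp add: Lw_def sa_def sb_def vector_add_ldistrib sum.distrib vector_smult_assoc
        sum_smult_const)
  show "Lw (\<lambda>k. w k + a k *s w i1 + b k *s w i2) c = Lw w (T c)" for c
    by (simp add: Lsplit T_def Lw_add Lw_axis)
  have sa_lin: "sa (x + y) = sa x + sa y" "sa (x - y) = sa x - sa y" for x y
    by (simp_all add: sa_def algebra_simps sum.distrib sum_subtractf)
  have sb_lin: "sb (x + y) = sb x + sb y" "sb (x - y) = sb x - sb y" for x y
    by (simp_all add: sb_def algebra_simps sum.distrib sum_subtractf)
  have sa_ax: "sa (t *s axis i1 1) = 0" "sa (t *s axis i2 1) = 0" for t
  proof -
    have "sa (t *s axis i1 1) = (\<Sum>k\<in>UNIV. (if k = i1 then t * a i1 else 0))"
      unfolding sa_def by (rule sum.cong) (auto simp: axis_def)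
    thus "sa (t *s axis i1 1) = 0" using assms(2) by simp
    have "sa (t *s axis i2 1) = (\<Sum>k\<in>UNIV. (if k = i2 then t * a i2 else 0))"
      unfolding sa_def by (rule sum.cong) (auto simp: axis_def)
    thus "sa (t *s axis i2 1) = 0" using assms(3) by simp
  qed
  have sb_ax: "sb (t *s axis i1 1) = 0" "sb (t *s axis i2 1) = 0" for t
  proof -
    have "sb (t *s axis i1 1) = (\<Sum>k\<in>UNIV. (if k = i1 then t * b i1 else 0))"
      unfolding sb_def by (rule sum.cong) (auto simp: axis_def)
    thus "sb (t *s axis i1 1) = 0" using assms(4) by simp
    have "sb (t *s axis i2 1) = (\<Sum>k\<in>UNIV. (if k = i2 then t * b i2 else 0))"
      unfolding sb_def by (rule sum.cong) (auto simp: axis_def)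
    thus "sb (t *s axis i2 1) = 0" using assms(5) by simp
  qed
  have saT: "sa (T c) = sa c" "sb (T c) = sb c" for c
    by (simp_all add: T_def sa_lin sb_lin sa_ax sb_ax)
  show "bij T"
  proof (rule bij_witness[of "\<lambda>x. x - sa x *s axis i1 1 - sb x *s axis i2 1"])
    show "T x - sa (T x) *s axis i1 1 - sb (T x) *s axis i2 1 = x" for x
      by (simp add: saT, simp add: T_def)
    show "T (y - sa y *s axis i1 1 - sb y *s axis i2 1) = y" for y
    proof -
      have "sa (y - sa y *s axis i1 1 - sb y *s axis i2 1) = sa y"
        "sb (y - sa y *s axis i1 1 - sb y *s axis i2 1) = sb y"
        by (simp_all add: sa_lin sb_lin sa_ax sb_ax)
      thus ?thesis by (simp add: T_def)
    qed
  qed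
qed




lemma card4: "a \<noteq> b \<Longrightarrow> a \<noteq> c \<Longrightarrow> a \<noteq> d \<Longrightarrow> b \<noteq> c \<Longrightarrow> b \<noteq> d \<Longrightarrow> c \<noteq> d \<Longrightarrow> card {a,b,c,d} = 4"
  by simp

lemma zp_basis:
  fixes A :: "int^'p \<Rightarrow> int^3^3" and g1 g2 :: "int^3^3"
  assumes hom: "\<And>l m. A (l + m) = A l ** A m" and A0: "A 0 = mat 1"
    and V: "range A = {mat 1, g1, g2, g1 ** g2}"
    and sq: "\<And>x. x \<in> range A \<Longrightarrow> x ** x = mat 1"
    and cm: "\<And>x y. x \<in> range A \<Longrightarrow> y \<in> range A \<Longrightarrow> x ** y = y ** x"
    and dist: "g1 \<noteq> mat 1" "g2 \<noteq> mat 1" "g1 \<noteq> g2" "g1 ** g2 \<noteq> mat 1" "g1 ** g2 \<noteq> g1" "g1 ** g2 \<noteq> g2"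
  shows "\<exists>w i1 i2. i1 \<noteq> i2 \<and> Zbasis w \<and> A (w i1) = g1 \<and> A (w i2) = g2 \<and>
           (\<forall>k. k \<noteq> i1 \<and> k \<noteq> i2 \<longrightarrow> A (w k) = mat 1)"
proof -
  define e where "e i = (axis i 1 :: int^'p)" for i
  have cl: "x ** y \<in> range A" if xyR: "x \<in> range A" "y \<in> range A" for x y
  proof -
    obtain l m where "x = A l" "y = A m" using xyR by auto
    hence "x ** y = A (l + m)" using hom by simp
    thus ?thesis by simp
  qed
  have Aneg: "A (- x) = A x" for x
  proof -
    have "A (- x) ** A x = mat 1" using hom[of "-x" x] A0 by simp
    hence "A (- x) = A (- x) ** (A x ** A x)" using sq[of "A x"] by simp
    also have "... = A x" using \<open>A (- x) ** A x = mat 1\<close> by (simp add: matrix_mul_assoc)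
    finally show ?thesis .
  qed
  have Anat: "A (int n *s x) = mat 1 \<or> A (int n *s x) = A x" for n x
  proof (induction n)
    case 0 thus ?case using A0 by simp
  next
    case (Suc n)
    have "A (int (Suc n) *s x) = A (int n *s x) ** A x"
      using hom[of "int n *s x" x] by (simp add: vector_sadd_rdistrib add.commute)
    thus ?case using Suc sq[of "A x"] by auto
  qed
  have Asm: "A (c *s x) = mat 1 \<or> A (c *s x) = A x" for c x
  proof (cases "c \<ge> 0")
    case True thus ?thesis using Anat[of "nat c" x] by simp
  next
    case False
    hence "c *s x = - (int (nat (- c)) *s x)" by (simp add: vec_eq_iff)
    thus ?thesis using Anat[of "nat (-c)" x] Aneg by metis
  qed
  have A1s: "A (1 *s x) = A x" "A ((-1) *s x) = A x" "A (0 *s x) = mat 1" for x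
  proof -
    show "A (1 *s x) = A x" by simp
    have "(-1) *s x = - x" by (simp add: vec_eq_iff)
    thus "A ((-1) *s x) = A x" using Aneg by simp
    show "A (0 *s x) = mat 1" using A0 by simp
  qed
  have gen: "\<forall>l. A l \<in> {mat 1, \<tau>}" if t: "\<tau> ** \<tau> = mat 1" and ax: "\<forall>i. A (e i) \<in> {mat 1, \<tau>}" for \<tau>
  proof
    fix l
    have clQ: "X ** Y \<in> {mat 1, \<tau>}" if "X \<in> {mat 1, \<tau>}" "Y \<in> {mat 1, \<tau>}" for X Y
      using that t by auto
    have fin: "A (sum f F) \<in> {mat 1, \<tau>}" if "finite F" "\<forall>i\<in>F. A (f i) \<in> {mat 1, \<tau>}" for F f
      using that
    proof (induction F rule: finite_induct)
      case empty thus ?case using A0 by simp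
    next
      case (insert x F)
      have "A (sum f (insert x F)) = A (f x) ** A (sum f F)" using insert.hyps by (simp add: hom)
      moreover have "A (f x) \<in> {mat 1, \<tau>}" using insert.prems by blast
      moreover have "A (sum f F) \<in> {mat 1, \<tau>}" using insert.IH insert.prems by blast
      ultimately show ?case using clQ by simp
    qed
    have "A (l$i *s e i) \<in> {mat 1, \<tau>}" for i
    proof -
      have "A (e i) \<in> {mat 1, \<tau>}" using ax by blast
      thus ?thesis using Asm[of "l$i" "e i"] by auto
    qed
    hence "A (\<Sum>i\<in>UNIV. l$i *s e i) \<in> {mat 1, \<tau>}" by (intro fin) auto
    moreover have "(\<Sum>i\<in>UNIV. l$i *s e i) = l" unfolding e_def by (rule basis_expansion)
    ultimately show "A l \<in> {mat 1, \<tau>}" by simp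
  qed
  have I1: "mat 1 \<in> range A" using A0 by (metis rangeI)
  have gR: "g1 \<in> range A" "g2 \<in> range A" using V by auto
  have c4: "card (range A) = 4" using V dist by (simp add: card4)
  have canc: "X ** (X ** Y) = Y" "(X ** Y) ** Y = X" "Y ** (X ** Y) = X" "(X ** Y) ** X = Y"
    if "X \<in> range A" "Y \<in> range A" for X Y
  proof -
    show "X ** (X ** Y) = Y" using sq[OF that(1)] by (simp add: matrix_mul_assoc)
    show "(X ** Y) ** Y = X" using sq[OF that(2)] by (simp flip: matrix_mul_assoc)
    show "Y ** (X ** Y) = X" using sq[OF that(2)] cm[OF that] by (simp add: matrix_mul_assoc)
    show "(X ** Y) ** X = Y" using sq[OF that(1)] cm[OF that] by (simp flip: matrix_mul_assoc)
  qed
  have range4: "range A = {mat 1, X, Y, X ** Y}"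
    if xy: "X \<in> range A" "Y \<in> range A" "X \<noteq> mat 1" "Y \<noteq> mat 1" "X \<noteq> Y" for X Y
  proof -
    have "X ** Y \<noteq> mat 1" using canc(1)[OF xy(1,2)] xy(5) by auto
    moreover have "X ** Y \<noteq> X" using canc(1)[OF xy(1,2)] sq[OF xy(1)] xy(4) by auto
    moreover have "X ** Y \<noteq> Y" using canc(2)[OF xy(1,2)] sq[OF xy(2)] xy(3) by auto
    ultimately have "card {mat 1, X, Y, X ** Y} = 4" using xy by (simp add: card4)
    moreover have "{mat 1, X, Y, X ** Y} \<subseteq> range A" using xy cl I1 by blast
    moreover have "finite (range A)" using V by simp
    ultimately show ?thesis using c4 by (metis card_subset_eq)
  qed
  obtain i1 where i1: "A (e i1) \<noteq> mat 1"
  proof (rule ccontr)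
    assume "\<not> thesis"
    hence "\<forall>i. A (e i) \<in> {mat 1, mat 1}" using that by blast
    hence "\<forall>l. A l \<in> {mat 1, mat 1}" using gen[of "mat 1"] by simp
    thus False using gR dist by auto
  qed
  define A1 where "A1 = A (e i1)"
  obtain i2 where i2: "A (e i2) \<noteq> mat 1" "A (e i2) \<noteq> A1"
  proof (rule ccontr)
    assume "\<not> thesis"
    hence "\<forall>i. A (e i) \<in> {mat 1, A1}" using that by blast
    hence "\<forall>l. A l \<in> {mat 1, A1}" using gen[of A1] sq A1_def by auto
    thus False using gR dist by (metis empty_iff insert_iff rangeE)
  qed
  define A2 where "A2 = A (e i2)"
  have i12: "i1 \<noteq> i2" using i2 A1_def by auto
  have AR: "A1 \<in> range A" "A2 \<in> range A" using A1_def A2_def by auto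
  have R12: "range A = {mat 1, A1, A2, A1 ** A2}" using range4[OF AR] i1 i2 A1_def A2_def by auto
  have n12: "A1 ** A2 \<noteq> mat 1" "A1 ** A2 \<noteq> A1" "A1 ** A2 \<noteq> A2"
    using canc[OF AR] sq AR i1 i2 A1_def A2_def by (metis matrix_mul_rid matrix_mul_lid)+
  define a where "a k = (if k = i1 \<or> k = i2 then 0 else if A (e k) = A1 \<or> A (e k) = A1 ** A2 then 1 else (0::int))" for k
  define b where "b k = (if k = i1 \<or> k = i2 then 0 else if A (e k) = A2 \<or> A (e k) = A1 ** A2 then 1 else (0::int))" for k
  define w0 where "w0 k = e k + a k *s e i1 + b k *s e i2" for k
  have Z0: "Zbasis w0" unfolding w0_def e_def
    by (rule Zbasis_mass[OF Zbasis_std]) (simp_all add: a_def b_def)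
  have w0i: "w0 i1 = e i1" "w0 i2 = e i2" by (simp_all add: w0_def a_def b_def)
  have w0k: "A (w0 k) = mat 1" if "k \<noteq> i1" "k \<noteq> i2" for k
  proof -
    have "A (e k) \<in> range A" by simp
    hence cs: "A (e k) = mat 1 \<or> A (e k) = A1 \<or> A (e k) = A2 \<or> A (e k) = A1 ** A2" using R12 by auto
    have "A (w0 k) = A (e k) ** A (a k *s e i1) ** A (b k *s e i2)" by (simp add: w0_def hom)
    also have "... = mat 1"
      using cs that i2 n12 sq[OF AR(1)] sq[OF AR(2)] canc[OF AR] A1s A1_def A2_def
      by (auto simp: a_def b_def matrix_mul_assoc)
    finally show ?thesis .
  qed
  define P where "P w \<longleftrightarrow> Zbasis w \<and> (\<forall>k. k \<noteq> i1 \<and> k \<noteq> i2 \<longrightarrow> A (w k) = mat 1)" for w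
  have P0: "P w0" using Z0 w0k P_def by blast
  have addop: "P (w(i := w i + s *s w j)) \<and> A ((w(i := w i + s *s w j)) i) = A (w i) ** A (w j) \<and>
       A ((w(i := w i + s *s w j)) j) = A (w j)"
    if "P w" "i \<noteq> j" "i = i1 \<and> j = i2 \<or> i = i2 \<and> j = i1" "s = 1 \<or> s = -1" for w i j s
  proof -
    have "Zbasis (w(i := w i + s *s w j))" using Zbasis_add that P_def by blast
    moreover have "A (w i + s *s w j) = A (w i) ** A (w j)" using that(4) hom A1s by auto
    ultimately show ?thesis using that by (auto simp: P_def)
  qed
  have step1: "\<exists>w1. P w1 \<and> A (w1 i1) = g1 \<and> A (w1 i2) \<in> range A \<and> A (w1 i2) \<noteq> mat 1 \<and> A (w1 i2) \<noteq> g1"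
  proof -
    have "g1 \<in> {mat 1, A1, A2, A1 ** A2}" using R12 gR by blast
    hence "g1 = A1 \<or> g1 = A2 \<or> g1 = A1 ** A2" using dist by blast
    thus ?thesis
    proof (elim disjE)
      assume g: "g1 = A1"
      show ?thesis using P0 w0i g A1_def A2_def i2 by auto
    next
      assume g: "g1 = A2"
      define wa where "wa = w0(i1 := w0 i1 + 1 *s w0 i2)"
      have a1: "P wa" "A (wa i1) = A1 ** A2" "A (wa i2) = A2"
        using addop[OF P0 i12, of 1] w0i A1_def A2_def wa_def by auto
      define wb where "wb = wa(i2 := wa i2 + (-1) *s wa i1)"
      have a2: "P wb" "A (wb i2) = A1" "A (wb i1) = A1 ** A2"
        using addop[OF a1(1) i12[symmetric], of "-1"] a1 canc[OF AR] wb_def by auto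
      define wc where "wc = wb(i1 := wb i1 + 1 *s wb i2)"
      have a3: "P wc" "A (wc i1) = A2" "A (wc i2) = A1"
        using addop[OF a2(1) i12, of 1] a2 canc[OF AR] wc_def by auto
      have "A (wc i2) \<in> range A" by simp
      thus ?thesis using a3 g i1 i2 A1_def A2_def by (intro exI[of _ wc]) auto
    next
      assume g: "g1 = A1 ** A2"
      define wa where "wa = w0(i1 := w0 i1 + 1 *s w0 i2)"
      have a1: "P wa" "A (wa i1) = A1 ** A2" "A (wa i2) = A2"
        using addop[OF P0 i12, of 1] w0i A1_def A2_def wa_def by auto
      show ?thesis using a1 g AR i2 n12 A2_def by auto
    qed
  qed
  then obtain w1 where w1: "P w1" "A (w1 i1) = g1" "A (w1 i2) \<in> range A" "A (w1 i2) \<noteq> mat 1" "A (w1 i2) \<noteq> g1"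
    by blast
  define Y where "Y = A (w1 i2)"
  have RY: "range A = {mat 1, g1, Y, g1 ** Y}" using range4[OF gR(1) w1(3)] dist w1 Y_def by auto
  have "g2 \<in> {mat 1, g1, Y, g1 ** Y}" using RY gR by blast
  hence "g2 = Y \<or> g2 = g1 ** Y" using dist by blast
  thus ?thesis
  proof (elim disjE)
    assume "g2 = Y"
    thus ?thesis using w1 i12 Y_def P_def by blast
  next
    assume g: "g2 = g1 ** Y"
    define w2 where "w2 = w1(i2 := w1 i2 + 1 *s w1 i1)"
    have a: "P w2" "A (w2 i2) = Y ** g1" "A (w2 i1) = g1"
      using addop[OF w1(1) i12[symmetric], of 1] w1 Y_def w2_def by auto
    have "Y ** g1 = g2" using g cm[OF gR(1) w1(3)] Y_def by simp
    thus ?thesis using a i12 P_def by metis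
  qed
qed




lemma normal_structure: assumes "good S"
  shows "\<exists>H Hinv :: int^3^3. \<exists>a b c d. H ** Hinv = mat 1 \<and> Hinv ** H = mat 1 \<and> a*d + 2*(b+c) = 0 \<and>
     (\<lambda>h. H ** h ** Hinv) ` S = {mat 1, mk3 1 a b 0 (-1) 0 0 0 (-1), mk3 (-1) 0 c 0 (-1) d 0 0 1,
          mk3 1 a b 0 (-1) 0 0 0 (-1) ** mk3 (-1) 0 c 0 (-1) d 0 0 1}"
proof -
  obtain H1 Hinv1 :: "int^3^3" where h1: "H1 ** Hinv1 = mat 1" "Hinv1 ** H1 = mat 1"
    "\<forall>h\<in>S. (H1 ** h ** Hinv1)$2$1 = 0 \<and> (H1 ** h ** Hinv1)$3$1 = 0"
    using stepA[OF assms] by blast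
  define S1 where "S1 = (\<lambda>h. H1 ** h ** Hinv1) ` S"
  have g1: "good S1" unfolding S1_def using good_conj[OF assms h1(1,2)] .
  have l1: "\<forall>h\<in>S1. h$2$1 = 0 \<and> h$3$1 = 0" using h1(3) S1_def by auto
  obtain H2 Hinv2 :: "int^3^3" where h2: "H2 ** Hinv2 = mat 1" "Hinv2 ** H2 = mat 1"
    "\<forall>h\<in>S1. (H2 ** h ** Hinv2)$2$1 = 0 \<and> (H2 ** h ** Hinv2)$3$1 = 0 \<and> (H2 ** h ** Hinv2)$3$2 = 0"
    using stepB[OF g1 l1] by blast
  define S2 where "S2 = (\<lambda>h. H2 ** h ** Hinv2) ` S1"
  have g2: "good S2" unfolding S2_def using good_conj[OF g1 h2(1,2)] .
  have l2: "\<forall>h\<in>S2. h$2$1 = 0 \<and> h$3$1 = 0 \<and> h$3$2 = 0" using h2(3) S2_def by auto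
  obtain a b c d where abcd: "a*d + 2*(b+c) = 0"
    "S2 = {mat 1, mk3 1 a b 0 (-1) 0 0 0 (-1), mk3 (-1) 0 c 0 (-1) d 0 0 1,
          mk3 1 a b 0 (-1) 0 0 0 (-1) ** mk3 (-1) 0 c 0 (-1) d 0 0 1}"
    using stepC[OF g2 l2] by blast
  define H where "H = H2 ** H1"
  define Hinv where "Hinv = Hinv1 ** Hinv2"
  have "H ** Hinv = H2 ** (H1 ** Hinv1) ** Hinv2" unfolding H_def Hinv_def by (simp add: matrix_mul_assoc)
  hence HI: "H ** Hinv = mat 1" using h1(1) h2(1) by simp
  have "Hinv ** H = Hinv1 ** (Hinv2 ** H2) ** H1" unfolding H_def Hinv_def by (simp add: matrix_mul_assoc)
  hence IH: "Hinv ** H = mat 1" using h1(2) h2(2) by simp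
  have "S2 = (\<lambda>h. H ** h ** Hinv) ` S"
    unfolding S2_def S1_def image_image H_def Hinv_def by (simp add: matrix_mul_assoc)
  thus ?thesis using HI IH abcd by metis
qed

lemma klein:
  fixes T :: "int^3^3 \<Rightarrow> int^3^3" and R :: "(int^3^3) set"
  assumes Th: "\<forall>x\<in>R. \<forall>y\<in>R. T (x ** y) = T x ** T y" and Ti: "inj_on T R"
    and TR: "T ` R = {mat 1, mk3 1 a b 0 (-1) 0 0 0 (-1), mk3 (-1) 0 c 0 (-1) d 0 0 1,
          mk3 1 a b 0 (-1) 0 0 0 (-1) ** mk3 (-1) 0 c 0 (-1) d 0 0 1}"
  shows "\<lparr>carrier = R, mult = (**), one = mat 1\<rparr> \<cong> Klein_four"
proof -
  define N1 where "N1 = mk3 1 a b 0 (-1) 0 0 0 (-1::int)"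
  define N2 where "N2 = mk3 (-1) 0 c 0 (-1) d 0 0 (1::int)"
  define V where "V = {mat 1, N1, N2, N1 ** N2}"
  have TR': "T ` R = V" using TR by (simp add: V_def N1_def N2_def)
  define \<psi> where "\<psi> M = (if M$1$1 = 1 then (0::int) else 1, if M$3$3 = 1 then 0 else (1::int))" for M :: "int^3^3"
  define \<phi> where "\<phi> x = \<psi> (T x)" for x
  have V4: "M \<in> V \<longleftrightarrow> M = mat 1 \<or> M = N1 \<or> M = N2 \<or> M = N1 ** N2" for M by (simp add: V_def)
  have psiV: "\<psi> (mat 1) = (0,0)" "\<psi> N1 = (0,1)" "\<psi> N2 = (1,0)" "\<psi> (N1 ** N2) = (1,1)"
    by (simp_all add: \<psi>_def N1_def N2_def mat1_mk3)
  have hom\<psi>: "\<psi> (M ** M') = ((fst (\<psi> M) + fst (\<psi> M')) mod 2, (snd (\<psi> M) + snd (\<psi> M')) mod 2)"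
    if "M \<in> V" "M' \<in> V" for M M'
    using that unfolding V4 by (auto simp: \<psi>_def N1_def N2_def mat1_mk3)
  have KC: "carrier Klein_four = {0,1} \<times> {0,1}"
    by (auto simp: Klein_four_def carrier_integer_mod_group)
  have KM: "x \<otimes>\<^bsub>Klein_four\<^esub> y = ((fst x + fst y) mod 2, (snd x + snd y) mod 2)" for x y
    by (simp add: Klein_four_def mult_DirProd')
  have inV: "T x \<in> V" if "x \<in> R" for x using TR' that by blast
  have "\<phi> \<in> iso \<lparr>carrier = R, mult = (**), one = mat 1\<rparr> Klein_four"
  proof -
    have "\<phi> \<in> hom \<lparr>carrier = R, mult = (**), one = mat 1\<rparr> Klein_four"
    proof (unfold hom_def, intro CollectI conjI ballI)
      show "\<phi> \<in> carrier \<lparr>carrier = R, mult = (**), one = mat 1\<rparr> \<rightarrow> carrier Klein_four"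
      proof
        fix x assume "x \<in> carrier \<lparr>carrier = R, mult = (**), one = mat 1\<rparr>"
        hence "T x \<in> V" using inV by simp
        thus "\<phi> x \<in> carrier Klein_four" unfolding KC \<phi>_def V4 using psiV by auto
      qed
      fix x y assume xy: "x \<in> carrier \<lparr>carrier = R, mult = (**), one = mat 1\<rparr>"
        "y \<in> carrier \<lparr>carrier = R, mult = (**), one = mat 1\<rparr>"
      hence "x \<in> R" "y \<in> R" by simp_all
      thus "\<phi> (x \<otimes>\<^bsub>\<lparr>carrier = R, mult = (**), one = mat 1\<rparr>\<^esub> y) =
            \<phi> x \<otimes>\<^bsub>Klein_four\<^esub> \<phi> y"
        using Th hom\<psi> inV by (simp add: \<phi>_def KM)
    qed
    moreover have "bij_betw \<phi> R (carrier Klein_four)"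
    proof (unfold bij_betw_def, intro conjI)
      show "inj_on \<phi> R"
      proof (rule inj_onI)
        fix x y assume "x \<in> R" "y \<in> R" "\<phi> x = \<phi> y"
        moreover have "\<psi> M = \<psi> M' \<Longrightarrow> M = M'" if "M \<in> V" "M' \<in> V" for M M'
          using that psiV unfolding V4 by auto
        ultimately have "T x = T y" using inV by (simp add: \<phi>_def)
        thus "x = y" using Ti \<open>x \<in> R\<close> \<open>y \<in> R\<close> by (meson inj_onD)
      qed
      have "\<phi> ` R = \<psi> ` V" unfolding \<phi>_def using TR' by (metis image_image)
      also have "... = {0,1} \<times> {0,1}" unfolding V_def using psiV by auto
      finally show "\<phi> ` R = carrier Klein_four" using KC by simp
    qed
    ultimately show ?thesis by (simp add: iso_def)
  qed
  thus ?thesis by (rule is_isoI)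
qed

lemma A_smult_one:
  fixes A :: "int^'p \<Rightarrow> int^3^3"
  assumes hom: "\<And>l m. A (l + m) = A l ** A m" and A0: "A 0 = mat 1" and x: "A x = mat 1"
  shows "A (c *s x) = mat 1"
proof -
  have n: "A (int n *s x) = mat 1" for n
  proof (induction n)
    case 0 thus ?case using A0 by simp
  next
    case (Suc n)
    have "A (int (Suc n) *s x) = A (int n *s x) ** A x"
      using hom[of "int n *s x" x] by (simp add: vector_sadd_rdistrib add.commute)
    thus ?case using Suc x by simp
  qed
  show ?thesis
  proof (cases "c \<ge> 0")
    case True thus ?thesis using n[of "nat c"] by simp
  next
    case False
    hence e: "c *s x = - (int (nat (- c)) *s x)" by (simp add: vec_eq_iff)
    define y where "y = int (nat (- c)) *s x"
    have Ay: "A y = mat 1" unfolding y_def by (rule n)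
    have "A (- y) = A (- y) ** A y" using Ay by simp
    also have "... = A (- y + y)" by (rule hom[symmetric])
    also have "... = mat 1" using A0 by simp
    finally show ?thesis using e y_def by simp
  qed
qed

lemma A_sum_one:
  fixes A :: "int^'p \<Rightarrow> int^3^3"
  assumes hom: "\<And>l m. A (l + m) = A l ** A m" and A0: "A 0 = mat 1"
    and "finite F" "\<forall>i\<in>F. A (f i) = mat 1"
  shows "A (sum f F) = mat 1"
  using assms(3,4)
proof (induction F rule: finite_induct)
  case empty thus ?case using A0 by simp
next
  case (insert x F)
  thus ?case using hom by simp
qed

theorem theorem2:
  fixes A :: "int^'p \<Rightarrow> int^3^3"
  assumes "CARD('p) \<ge> 2"
    and "spectrally_unitary A"
    and "Fix A = {0}"
  shows "(\<exists>w :: 'p \<Rightarrow> int^'p. \<exists>i1 i2. i1 \<noteq> i2 \<and> Zbasis w \<and>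
           (\<exists>H Hinv :: int^3^3. H ** Hinv = mat 1 \<and> Hinv ** H = mat 1 \<and>
             (\<exists>a b c d :: int. a * d + 2 * (b + c) = 0 \<and>
                H ** A (w i1) ** Hinv =
                  vector [vector [1, a, b], vector [0, -1, 0], vector [0, 0, -1]] \<and>
                H ** A (w i2) ** Hinv =
                  vector [vector [-1, 0, c], vector [0, -1, d], vector [0, 0, 1]]) \<and>
             (\<forall>cf :: int^'p. cf $ i1 = 0 \<and> cf $ i2 = 0 \<longrightarrow>
                H ** A (\<Sum>i\<in>UNIV. cf $ i *s w i) ** Hinv = mat 1)))
         \<and> image_group A \<cong> Klein_four"
proof -
  have hom: "\<And>l m. A (l + m) = A l ** A m" and inv: "\<And>l. int_invertible (A l)"
    and eig: "\<And>l. has_eigenvalue_one (A l)"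
    using assms(2) by (auto simp: spectrally_unitary_def Zaction_def)
  have A0: "A 0 = mat 1"
  proof -
    obtain N where N: "N ** A 0 = mat 1" using inv[of 0] by (auto simp: int_invertible_def)
    have "A 0 = A 0 ** A 0" using hom[of 0 0] by simp
    hence "N ** A 0 = (N ** A 0) ** A 0" by (metis matrix_mul_assoc)
    thus ?thesis using N by simp
  qed
  have good: "good (range A)"
  proof -
    have "mat 1 \<in> range A" using A0 by (metis rangeI)
    moreover have "\<forall>h\<in>range A. \<forall>k\<in>range A. h ** k \<in> range A" using hom by (auto simp flip: hom)
    moreover have "\<forall>h\<in>range A. \<forall>k\<in>range A. h ** k = k ** h" using hom by (auto simp flip: hom simp: add.commute)
    moreover have "\<forall>h\<in>range A. \<exists>k\<in>range A. k ** h = mat 1"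
    proof
      fix h assume "h \<in> range A"
      then obtain l where "h = A l" by auto
      hence "A (-l) ** h = mat 1" using hom[of "-l" l] A0 by simp
      thus "\<exists>k\<in>range A. k ** h = mat 1" by blast
    qed
    moreover have "\<forall>h\<in>range A. det (h - mat 1) = 0" using eig eig_det by auto
    moreover have "\<forall>v. (\<forall>h\<in>range A. h *v v = v) \<longrightarrow> v = 0"
      using assms(3) by (auto simp: Fix_def)
    ultimately show ?thesis by (simp add: good_def)
  qed
  obtain H Hinv :: "int^3^3" and a b c d where st: "H ** Hinv = mat 1" "Hinv ** H = mat 1" "a*d + 2*(b+c) = 0"
    "(\<lambda>h. H ** h ** Hinv) ` range A = {mat 1, mk3 1 a b 0 (-1) 0 0 0 (-1), mk3 (-1) 0 c 0 (-1) d 0 0 1,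
          mk3 1 a b 0 (-1) 0 0 0 (-1) ** mk3 (-1) 0 c 0 (-1) d 0 0 1}"
    using normal_structure[OF good] by blast
  define N1 where "N1 = mk3 1 a b 0 (-1) 0 0 0 (-1::int)"
  define N2 where "N2 = mk3 (-1) 0 c 0 (-1) d 0 0 (1::int)"
  define T where "T x = H ** x ** Hinv" for x
  define Ti where "Ti x = Hinv ** x ** H" for x
  have TiT: "Ti (T x) = x" for x
  proof -
    have "Ti (T x) = (Hinv ** H) ** x ** (Hinv ** H)" by (simp add: T_def Ti_def matrix_mul_assoc)
    thus ?thesis using st(2) by simp
  qed
  have TTi: "T (Ti x) = x" for x
  proof -
    have "T (Ti x) = (H ** Hinv) ** x ** (H ** Hinv)" by (simp add: T_def Ti_def matrix_mul_assoc)
    thus ?thesis using st(1) by simp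
  qed
  have Tm: "T (x ** y) = T x ** T y" for x y unfolding T_def using conj_mult[OF st(2)] by simp
  have Tim: "Ti (x ** y) = Ti x ** Ti y" for x y unfolding Ti_def using conj_mult[OF st(1)] by simp
  have T1: "T (mat 1) = mat 1" using st(1) by (simp add: T_def)
  have Ti1: "Ti (mat 1) = mat 1" using st(2) by (simp add: Ti_def)
  have Tinj: "inj_on T (range A)"
  proof (rule inj_onI)
    fix x y assume "T x = T y"
    hence "Ti (T x) = Ti (T y)" by simp
    thus "x = y" by (simp only: TiT)
  qed
  have TR: "T ` range A = {mat 1, N1, N2, N1 ** N2}" using st(4) by (simp add: T_def N1_def N2_def)
  have Kl: "image_group A \<cong> Klein_four"
    unfolding image_group_def
  proof (rule klein[of "range A" T a b c d])
    show "\<forall>x\<in>range A. \<forall>y\<in>range A. T (x ** y) = T x ** T y" using Tm by blast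
    show "inj_on T (range A)" by (rule Tinj)
    show "T ` range A = {mat 1, mk3 1 a b 0 (-1) 0 0 0 (-1), mk3 (-1) 0 c 0 (-1) d 0 0 1,
          mk3 1 a b 0 (-1) 0 0 0 (-1) ** mk3 (-1) 0 c 0 (-1) d 0 0 1}"
      unfolding T_def by (rule st(4))
  qed
  define g1 where "g1 = Ti N1"
  define g2 where "g2 = Ti N2"
  have Tg: "T g1 = N1" "T g2 = N2" "T (g1 ** g2) = N1 ** N2" by (simp_all add: g1_def g2_def TTi Tm)
  have "range A = Ti ` T ` range A" by (simp add: image_image TiT)
  also have "... = {mat 1, g1, g2, g1 ** g2}"
    using TR by (simp add: g1_def g2_def Tim Ti1)
  finally have RA: "range A = {mat 1, g1, g2, g1 ** g2}" .
  have Nd: "N1 \<noteq> mat 1" "N2 \<noteq> mat 1" "N1 \<noteq> N2" "N1 ** N2 \<noteq> mat 1" "N1 ** N2 \<noteq> N1" "N1 ** N2 \<noteq> N2"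
    by (simp_all add: N1_def N2_def mat1_mk3)
  have gd: "g1 \<noteq> mat 1" "g2 \<noteq> mat 1" "g1 \<noteq> g2" "g1 ** g2 \<noteq> mat 1" "g1 ** g2 \<noteq> g1" "g1 ** g2 \<noteq> g2"
    using Nd Tg T1 by metis+
  have sq: "x ** x = mat 1" if "x \<in> range A" for x
  proof -
    have "T x \<in> {mat 1, N1, N2, N1 ** N2}" using TR that by blast
    moreover have "N1 ** N1 = mat 1" "N2 ** N2 = mat 1" by (simp_all add: N1_def N2_def mat1_mk3)
    moreover have "(N1 ** N2) ** (N1 ** N2) = mk3 1 0 (-(a*d + 2*(b+c))) 0 1 0 0 0 1"
      by (simp add: N1_def N2_def algebra_simps)
    hence "(N1 ** N2) ** (N1 ** N2) = mat 1" using st(3) by (simp add: mat1_mk3)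
    ultimately have "T x ** T x = mat 1" by auto
    hence "T (x ** x) = T (mat 1)" using Tm T1 by simp
    thus ?thesis by (metis TiT)
  qed
  have cm: "x ** y = y ** x" if "x \<in> range A" "y \<in> range A" for x y
  proof -
    have "\<forall>h\<in>range A. \<forall>k\<in>range A. h ** k = k ** h" using good unfolding good_def by blast
    thus ?thesis using that by blast
  qed
  obtain w i1 i2 where W: "i1 \<noteq> i2" "Zbasis w" "A (w i1) = g1" "A (w i2) = g2"
    "\<forall>k. k \<noteq> i1 \<and> k \<noteq> i2 \<longrightarrow> A (w k) = mat 1"
    using zp_basis[of A g1 g2, OF hom A0 RA sq cm gd] by blast
  have cf: "H ** A (\<Sum>i\<in>UNIV. cf $ i *s w i) ** Hinv = mat 1" if cf0: "cf $ i1 = 0 \<and> cf $ i2 = 0" for cf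
  proof -
    have each: "A (cf $ i *s w i) = mat 1" for i
    proof (cases "i = i1 \<or> i = i2")
      case True
      hence "cf $ i = 0" using cf0 by auto
      hence z: "cf $ i *s w i = 0" by simp
      show ?thesis unfolding z by (rule A0)
    next
      case False
      hence "A (w i) = mat 1" using W(5) by blast
      thus ?thesis by (rule A_smult_one[OF hom A0])
    qed
    have "A (\<Sum>i\<in>UNIV. cf $ i *s w i) = mat 1"
      by (rule A_sum_one[OF hom A0]) (simp_all add: each)
    thus ?thesis using st(1) by simp
  qed
  have v1: "vector [vector [1, a, b], vector [0, -1, 0], vector [0, 0, -1]] = N1"
    by (simp add: N1_def mk3_def)
  have v2: "vector [vector [-1, 0, c], vector [0, -1, d], vector [0, 0, 1]] = N2"
    by (simp add: N2_def mk3_def)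
  have e1: "H ** A (w i1) ** Hinv = N1" using Tg(1) W(3) by (simp add: T_def)
  have e2: "H ** A (w i2) ** Hinv = N2" using Tg(2) W(4) by (simp add: T_def)
  have ABCD: "\<exists>a' b' c' d' :: int. a' * d' + 2 * (b' + c') = 0 \<and>
                H ** A (w i1) ** Hinv =
                  vector [vector [1, a', b'], vector [0, -1, 0], vector [0, 0, -1]] \<and>
                H ** A (w i2) ** Hinv =
                  vector [vector [-1, 0, c'], vector [0, -1, d'], vector [0, 0, 1]]"
    apply (rule exI[of _ a], rule exI[of _ b], rule exI[of _ c], rule exI[of _ d])
    using st(3) e1 e2 v1 v2 by simp
  have CF: "\<forall>cf :: int^'p. cf $ i1 = 0 \<and> cf $ i2 = 0 \<longrightarrow>
                H ** A (\<Sum>i\<in>UNIV. cf $ i *s w i) ** Hinv = mat 1" using cf by blast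
  have "\<exists>w :: 'p \<Rightarrow> int^'p. \<exists>i1 i2. i1 \<noteq> i2 \<and> Zbasis w \<and>
           (\<exists>H Hinv :: int^3^3. H ** Hinv = mat 1 \<and> Hinv ** H = mat 1 \<and>
             (\<exists>a b c d :: int. a * d + 2 * (b + c) = 0 \<and>
                H ** A (w i1) ** Hinv =
                  vector [vector [1, a, b], vector [0, -1, 0], vector [0, 0, -1]] \<and>
                H ** A (w i2) ** Hinv =
                  vector [vector [-1, 0, c], vector [0, -1, d], vector [0, 0, 1]]) \<and>
             (\<forall>cf :: int^'p. cf $ i1 = 0 \<and> cf $ i2 = 0 \<longrightarrow>
                H ** A (\<Sum>i\<in>UNIV. cf $ i *s w i) ** Hinv = mat 1))"
    apply (rule exI[of _ w], rule exI[of _ i1], rule exI[of _ i2])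
    apply (intro conjI W(1) W(2))
    apply (rule exI[of _ H], rule exI[of _ Hinv])
    using st(1,2) ABCD CF by blast
  thus ?thesis using Kl by blast
qed


end
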